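(* Let $\kappa$ be an inaccessible cardinal. Then the following are equivalent: (1) $\kappa$ is weakly compact; (2) every $(\kappa,\kappa)$-connected graph has a $K_\kappa$ minor.
   Context: A graph is a pair $(V,E)$ with $E\subseteq[V]^2$. For infinite cardinals $\kappa,\lambda$, a graph is $(\kappa,\lambda)$-connected if after the removal of any set of fewer than $\kappa$ vertices, the number of connected components of the remaining graph is non-zero and less than $\lambda$. $K_\kappa$ is the complete graph on $\kappa$ vertices. A graph $H$ is a minor of $G$ if there are pairwise disjoint non-empty vertex sets $(X_u)_{u\in V_H}$ of $G$, each inducing a connected subgraph, such that for each edge $\{u,v\}$ of $H$ some vertex of $X_u$ is adjacent in $G$ to some vertex of $X_v$. *)

theory Defs
  imports Main
begin

unbundle cardinal_syntax

text \<open>Cardinals are represented as cardinal orders (well-orders) in the sense of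
  HOL's BNF cardinal library: a cardinal is a relation r with Card_order r;
  its underlying set is Field r.\<close>

definition inaccessible :: "'a rel \<Rightarrow> bool" where
  "inaccessible k \<longleftrightarrow>
     Card_order k \<and> natLeq <o k \<and> regularCard k \<and>
     (\<forall>A. A \<subseteq> Field k \<and> |A| <o k \<longrightarrow> |Pow A| <o k)"

definition weakly_compact :: "'a rel \<Rightarrow> bool" where
  "weakly_compact k \<longleftrightarrow>
     Card_order k \<and> natLeq <o k \<and>
     (\<forall>c :: 'a set \<Rightarrow> bool. \<exists>H \<subseteq> Field k. |H| =o k \<and>
        (\<exists>b. \<forall>x\<in>H. \<forall>y\<in>H. x \<noteq> y \<longrightarrow> c {x, y} = b))"

definition graph :: "'v set \<Rightarrow> 'v set set \<Rightarrow> bool" where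
  "graph V E \<longleftrightarrow> (\<forall>e\<in>E. \<exists>x y. e = {x, y} \<and> x \<noteq> y \<and> x \<in> V \<and> y \<in> V)"

definition adj_in :: "'v set set \<Rightarrow> 'v set \<Rightarrow> 'v rel" where
  "adj_in E U = {(x, y). x \<in> U \<and> y \<in> U \<and> {x, y} \<in> E}"

definition components :: "'v set set \<Rightarrow> 'v set \<Rightarrow> 'v set set" where
  "components E U = {(adj_in E U)\<^sup>* `` {x} \<inter> U | x. x \<in> U}"

definition connected_set :: "'v set set \<Rightarrow> 'v set \<Rightarrow> bool" where
  "connected_set E U \<longleftrightarrow> U \<noteq> {} \<and> (\<forall>x\<in>U. \<forall>y\<in>U. (x, y) \<in> (adj_in E U)\<^sup>*)"

definition kl_connected :: "'a rel \<Rightarrow> 'b rel \<Rightarrow> 'v set \<Rightarrow> 'v set set \<Rightarrow> bool" where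
  "kl_connected k l V E \<longleftrightarrow>
     (\<forall>S. S \<subseteq> V \<and> |S| <o k \<longrightarrow>
        components E (V - S) \<noteq> {} \<and> |components E (V - S)| <o l)"

definition has_complete_minor :: "'a rel \<Rightarrow> 'v set \<Rightarrow> 'v set set \<Rightarrow> bool" where
  "has_complete_minor k V E \<longleftrightarrow>
     (\<exists>X :: 'a \<Rightarrow> 'v set.
        (\<forall>u\<in>Field k. X u \<subseteq> V \<and> connected_set E (X u)) \<and>
        (\<forall>u\<in>Field k. \<forall>w\<in>Field k. u \<noteq> w \<longrightarrow> X u \<inter> X w = {}) \<and>
        (\<forall>u\<in>Field k. \<forall>w\<in>Field k. u \<noteq> w \<longrightarrow>
            (\<exists>x\<in>X u. \<exists>y\<in>X w. {x, y} \<in> E)))"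

end

theory Submission
  imports Defs
begin

locale inacc =
  fixes k :: "'a rel"
  assumes inacc: "inaccessible k"
begin

lemma CO: "Card_order k" using inacc unfolding inaccessible_def by blast
lemma WO: "Well_order k" using CO card_order_on_well_order_on by blast
lemma REG: "regularCard k" using inacc unfolding inaccessible_def by blast
lemma natk: "natLeq <o k" using inacc unfolding inaccessible_def by blast
lemma FI: "|Field k| =o k" using CO card_of_Field_ordIso by blast
lemma INF: "infinite (Field k)"
proof
  assume "finite (Field k)"
  hence "|Field k| <o natLeq" by (metis finite_iff_ordLess_natLeq)
  hence "k <o natLeq" by (metis FI ordIso_symmetric ordIso_ordLess_trans)
  hence "k <o k" by (metis natk ordLess_transitive)
  thus False by (metis ordLess_irreflexive)
qed
lemma ST: "stable k" using regularCard_stable CO INF REG by blast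

lemma TRANS: "trans k" using WO unfolding order_on_defs by blast
lemma ANTI: "antisym k" using WO unfolding order_on_defs by blast
lemma TOT: "total_on (Field k) k" using WO unfolding order_on_defs by blast
lemma REFL: "refl_on (Field k) k" using WO unfolding order_on_defs by blast
lemma WFk: "wf (k - Id)" using WO unfolding order_on_defs by blast

definition lt :: "'a \<Rightarrow> 'a \<Rightarrow> bool" where "lt a b \<longleftrightarrow> (a,b) \<in> k \<and> a \<noteq> b"

lemma lt_Field: "lt a b \<Longrightarrow> a \<in> Field k \<and> b \<in> Field k"
  unfolding lt_def Field_def by blast
lemma le_Field: "(a,b) \<in> k \<Longrightarrow> a \<in> Field k \<and> b \<in> Field k"
  unfolding Field_def by blast
lemma le_refl: "a \<in> Field k \<Longrightarrow> (a,a) \<in> k" using REFL unfolding refl_on_def by blast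
lemma le_trans: "(a,b) \<in> k \<Longrightarrow> (b,c) \<in> k \<Longrightarrow> (a,c) \<in> k" using TRANS unfolding trans_def by blast
lemma le_anti: "(a,b) \<in> k \<Longrightarrow> (b,a) \<in> k \<Longrightarrow> a = b" using ANTI unfolding antisym_def by blast
lemma total: "a \<in> Field k \<Longrightarrow> b \<in> Field k \<Longrightarrow> lt a b \<or> a = b \<or> lt b a"
  using TOT unfolding total_on_def lt_def by blast
lemma not_lt: "a \<in> Field k \<Longrightarrow> b \<in> Field k \<Longrightarrow> \<not> lt a b \<Longrightarrow> (b,a) \<in> k"
  using total le_refl unfolding lt_def by blast
lemma lt_trans: "lt a b \<Longrightarrow> lt b c \<Longrightarrow> lt a c"
  unfolding lt_def using le_trans le_anti by blast
lemma lt_le_trans: "lt a b \<Longrightarrow> (b,c) \<in> k \<Longrightarrow> lt a c"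
  unfolding lt_def using le_trans le_anti by blast
lemma le_lt_trans: "(a,b) \<in> k \<Longrightarrow> lt b c \<Longrightarrow> lt a c"
  unfolding lt_def using le_trans le_anti by blast
lemma lt_irrefl: "\<not> lt a a" unfolding lt_def by blast
lemma lt_asym: "lt a b \<Longrightarrow> \<not> lt b a" unfolding lt_def using le_anti by blast
lemma lt_imp_le: "lt a b \<Longrightarrow> (a,b) \<in> k" unfolding lt_def by blast
lemma lt_not_le: "lt a b \<Longrightarrow> (b,a) \<notin> k" unfolding lt_def using le_anti by blast

lemma wf_lt: "wf {(a,b). lt a b}"
proof -
  have "{(a,b). lt a b} = k - Id" unfolding lt_def by auto
  thus ?thesis using WFk by simp
qed

lemma lt_min:
  assumes "x \<in> A"
  shows "\<exists>m\<in>A. \<forall>y. lt y m \<longrightarrow> y \<notin> A"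
  using wfE_min[OF wf_lt assms] by auto

definition small :: "'b set \<Rightarrow> bool" where "small A \<longleftrightarrow> |A| <o k"

lemma small_subset: "small A \<Longrightarrow> B \<subseteq> A \<Longrightarrow> small B"
  unfolding small_def by (metis card_of_mono1 ordLeq_ordLess_trans)
lemma small_image: "small A \<Longrightarrow> small (f ` A)"
  unfolding small_def by (metis card_of_image ordLeq_ordLess_trans)
lemma small_finite: "finite A \<Longrightarrow> small A"
  unfolding small_def by (metis finite_iff_ordLess_natLeq natk ordLess_transitive)
lemma small_empty: "small {}" by (simp add: small_finite)
lemma small_Un: "small A \<Longrightarrow> small B \<Longrightarrow> small (A \<union> B)"
  unfolding small_def using card_of_Un_ordLess_infinite_Field[OF INF CO] by metis
lemma small_insert: "small A \<Longrightarrow> small (insert x A)"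
proof -
  assume "small A"
  moreover have "small {x}" by (rule small_finite) simp
  ultimately have "small ({x} \<union> A)" using small_Un by blast
  thus ?thesis by simp
qed
lemma small_UN: "small I \<Longrightarrow> (\<And>i. i \<in> I \<Longrightarrow> small (F i)) \<Longrightarrow> small (\<Union>i\<in>I. F i)"
  unfolding small_def by (rule stable_UNION[OF ST])
lemma small_Sigma: "small I \<Longrightarrow> (\<And>i. i \<in> I \<Longrightarrow> small (F i)) \<Longrightarrow> small (Sigma I F)"
  unfolding small_def by (rule stable_elim[OF ST])
lemma small_Times: "small A \<Longrightarrow> small B \<Longrightarrow> small (A \<times> B)"
  using small_Sigma[of A "\<lambda>_. B"] by simp

lemma not_small_Field: "\<not> small (Field k)"
  unfolding small_def by (metis FI not_ordLess_ordIso)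

lemma small_iff: "small A \<longleftrightarrow> \<not> ( k \<le>o |A| )"
  unfolding small_def using not_ordLeq_iff_ordLess[OF card_of_Well_order WO, of A] by simp

lemma not_small_inj:
  assumes "\<not> small A"
  shows "\<exists>f. inj_on f (Field k) \<and> f ` Field k \<subseteq> A"
proof -
  have "k \<le>o |A|" using assms small_iff by blast
  hence "|Field k| \<le>o |A|" by (metis FI ordIso_ordLeq_trans)
  thus ?thesis by (metis card_of_ordLeq)
qed

lemma small_inj:
  assumes "small A"
  shows "\<exists>f. inj_on f A \<and> f ` A \<subseteq> Field k"
proof -
  have "|A| <o |Field k|" using assms unfolding small_def
    by (metis ordLess_ordIso_trans ordIso_symmetric FI)
  hence "|A| \<le>o |Field k|" by (metis ordLess_imp_ordLeq)
  thus ?thesis by (metis card_of_ordLeq)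
qed

lemma small_Pow: assumes "small A" shows "small (Pow A)"
proof -
  obtain f where f: "inj_on f A" "f ` A \<subseteq> Field k" using small_inj assms by blast
  have "small (f ` A)" using assms small_image by blast
  hence "|Pow (f ` A)| <o k" using inacc f(2) unfolding inaccessible_def small_def by blast
  moreover have "bij_betw ((`) f) (Pow A) (Pow (f ` A))"
    using bij_betw_Pow f(1) inj_on_imp_bij_betw by blast
  hence "|Pow A| =o |Pow (f ` A)|" by (metis card_of_ordIso)
  ultimately show ?thesis unfolding small_def by (metis ordIso_ordLess_trans)
qed

lemma small_underS: "a \<in> Field k \<Longrightarrow> small {b. lt b a}"
proof -
  assume "a \<in> Field k"
  hence "|underS k a| <o k" by (rule card_of_underS[OF CO])
  moreover have "underS k a = {b. lt b a}" unfolding underS_def lt_def by auto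
  ultimately show ?thesis unfolding small_def by simp
qed

lemma small_under: "a \<in> Field k \<Longrightarrow> small {b. (b,a) \<in> k}"
proof -
  assume a: "a \<in> Field k"
  have "{b. (b,a) \<in> k} \<subseteq> insert a {b. lt b a}" unfolding lt_def by auto
  moreover have "small (insert a {b. lt b a})" by (rule small_insert[OF small_underS[OF a]])
  ultimately show ?thesis using small_subset by blast
qed

lemma iso_notsmall: "|A| =o k \<Longrightarrow> \<not> small A"
  unfolding small_def by (metis not_ordLess_ordIso)

lemma no_max: "a \<in> Field k \<Longrightarrow> \<exists>b. lt a b"
proof (rule ccontr)
  assume a: "a \<in> Field k" and "\<not> (\<exists>b. lt a b)"
  hence "Field k \<subseteq> {b. (b,a) \<in> k}" using not_lt[OF a] by auto
  thus False using small_subset[OF small_under[OF a]] not_small_Field by metis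
qed

lemma bounded:
  assumes "A \<subseteq> Field k" "small A"
  shows "\<exists>g\<in>Field k. \<forall>a\<in>A. lt a g"
proof -
  have "\<not> cofinal A k"
  proof
    assume "cofinal A k"
    have "\<forall>K. K \<subseteq> Field k \<and> cofinal K k \<longrightarrow> |K| =o k" using REG unfolding regularCard_def .
    hence "|A| =o k" using assms(1) \<open>cofinal A k\<close> by blast
    thus False using assms(2) iso_notsmall by blast
  qed
  then obtain a where a: "a \<in> Field k" "\<forall>b\<in>A. a = b \<or> (a,b) \<notin> k"
    unfolding cofinal_def by auto
  have le: "\<forall>b\<in>A. (b,a) \<in> k"
  proof
    fix b assume b: "b \<in> A"
    show "(b,a) \<in> k"
    proof (cases "a = b")
      case True thus ?thesis using le_refl a(1) by simp
    next
      case False hence "(a,b) \<notin> k" using a(2) b by blast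
      hence "\<not> lt a b" using lt_imp_le by blast
      thus ?thesis using not_lt a(1) b assms(1) by blast
    qed
  qed
  obtain g where g: "lt a g" using no_max a(1) by blast
  have "\<forall>b\<in>A. lt b g" using le g le_lt_trans by blast
  moreover have "g \<in> Field k" using lt_Field[OF g] by blast
  ultimately show ?thesis by blast
qed

lemma unbounded_iso:
  assumes "A \<subseteq> Field k" "\<forall>a\<in>Field k. \<exists>b\<in>A. lt a b"
  shows "|A| =o k"
proof -
  have "cofinal A k" unfolding cofinal_def
  proof
    fix a assume "a \<in> Field k"
    then obtain b where "b \<in> A" "lt a b" using assms(2) by blast
    thus "\<exists>b\<in>A. a \<noteq> b \<and> (a, b) \<in> k" unfolding lt_def by blast
  qed
  have "\<forall>K. K \<subseteq> Field k \<and> cofinal K k \<longrightarrow> |K| =o k" using REG unfolding regularCard_def .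
  thus ?thesis using assms(1) \<open>cofinal A k\<close> by blast
qed

lemma notsmall_iso:
  assumes "A \<subseteq> Field k" "\<not> small A"
  shows "|A| =o k"
proof -
  have "|A| \<le>o k" by (metis card_of_mono1[OF assms(1)] FI ordLeq_ordIso_trans)
  thus ?thesis using assms(2) unfolding small_def by (metis ordLeq_iff_ordLess_or_ordIso)
qed


lemma unbounded_notsmall:
  assumes "A \<subseteq> Field k" "\<forall>a\<in>Field k. \<exists>b\<in>A. lt a b"
  shows "\<not> small A"
  using unbounded_iso[OF assms] iso_notsmall by blast

lemma notsmall_unbounded:
  assumes "A \<subseteq> Field k" "\<not> small A" "a \<in> Field k"
  shows "\<exists>b\<in>A. lt a b"
proof (rule ccontr)
  assume "\<not> (\<exists>b\<in>A. lt a b)"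
  hence "A \<subseteq> {b. (b,a) \<in> k}" using not_lt assms by blast
  thus False using small_under[OF assms(3)] small_subset assms(2) by blast
qed

lemma small_nat: "small (range (f :: nat \<Rightarrow> 'b))"
proof -
  have "|range f| \<le>o |UNIV :: nat set|" by (metis card_of_image)
  moreover have "|UNIV :: nat set| =o natLeq" by (metis card_of_nat)
  ultimately have "|range f| \<le>o natLeq" by (metis ordLeq_ordIso_trans)
  thus ?thesis unfolding small_def by (metis natk ordLeq_ordLess_trans)
qed

lemma closure_point:
  assumes h: "\<And>x. x \<in> Field k \<Longrightarrow> h x \<in> Field k" and a0: "a0 \<in> Field k"
  shows "\<exists>g\<in>Field k. lt a0 g \<and> (\<forall>x. lt x g \<longrightarrow> lt (h x) g)"
proof -
  define bd where "bd A = (SOME g. g \<in> Field k \<and> (\<forall>a\<in>A. lt a g))" for A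
  have bd: "bd A \<in> Field k \<and> (\<forall>a\<in>A. lt a (bd A))" if "A \<subseteq> Field k" "small A" for A
  proof -
    have "\<exists>g. g \<in> Field k \<and> (\<forall>a\<in>A. lt a g)" using bounded[OF that] by blast
    thus ?thesis unfolding bd_def by (rule someI_ex)
  qed
  define B where "B = rec_nat a0 (\<lambda>n b. bd (insert b (h ` {x. (x,b) \<in> k})))"
  have B0: "B 0 = a0" unfolding B_def by simp
  have BS: "B (Suc n) = bd (insert (B n) (h ` {x. (x,B n) \<in> k}))" for n unfolding B_def by simp
  have BF: "B n \<in> Field k \<and> lt (B n) (B (Suc n)) \<and> (\<forall>x. (x, B n) \<in> k \<longrightarrow> lt (h x) (B (Suc n)))" for n
  proof (induction n)
    case 0
    have sub: "insert (B 0) (h ` {x. (x,B 0) \<in> k}) \<subseteq> Field k" using B0 a0 h le_Field by blast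
    have sm: "small (insert (B 0) (h ` {x. (x,B 0) \<in> k}))"
      using small_insert small_image small_under B0 a0 by metis
    show ?case using bd[OF sub sm] BS[of 0] B0 a0 by auto
  next
    case (Suc n)
    hence F: "B (Suc n) \<in> Field k" using lt_Field by blast
    have sub: "insert (B (Suc n)) (h ` {x. (x,B (Suc n)) \<in> k}) \<subseteq> Field k" using F h le_Field by blast
    have sm: "small (insert (B (Suc n)) (h ` {x. (x,B (Suc n)) \<in> k}))"
      using small_insert small_image small_under F by metis
    show ?case using bd[OF sub sm] BS[of "Suc n"] F by auto
  qed
  have sub: "range B \<subseteq> Field k" using BF by blast
  obtain g0 where g0: "g0 \<in> Field k" "\<forall>a\<in>range B. lt a g0" using bounded[OF sub small_nat] by blast
  obtain g where g: "g \<in> {g. g \<in> Field k \<and> (\<forall>n. lt (B n) g)}"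
    and gmin: "\<forall>y. lt y g \<longrightarrow> y \<notin> {g. g \<in> Field k \<and> (\<forall>n. lt (B n) g)}"
    using lt_min[of g0 "{g. g \<in> Field k \<and> (\<forall>n. lt (B n) g)}"] g0 by blast
  have "\<forall>x. lt x g \<longrightarrow> lt (h x) g"
  proof (intro allI impI)
    fix x assume x: "lt x g"
    then obtain n where "\<not> lt (B n) x" using gmin lt_Field by blast
    hence "(x, B n) \<in> k" using not_lt BF x lt_Field by blast
    hence "lt (h x) (B (Suc n))" using BF by blast
    thus "lt (h x) g" using g lt_trans by blast
  qed
  thus ?thesis using g B0 by auto
qed

end

lemma adj_in_sym: "(x,y) \<in> adj_in E U \<Longrightarrow> (y,x) \<in> adj_in E U"
  unfolding adj_in_def by (auto simp: insert_commute)

lemma sym_adj: "sym (adj_in E U)"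
  by (rule symI) (rule adj_in_sym)

lemma rtrancl_adj_sym: "(x,y) \<in> (adj_in E U)\<^sup>* \<Longrightarrow> (y,x) \<in> (adj_in E U)\<^sup>*"
  by (rule symD[OF sym_rtrancl[OF sym_adj]])

lemma adj_in_mono: "U \<subseteq> U' \<Longrightarrow> adj_in E U \<subseteq> adj_in E U'"
  unfolding adj_in_def by auto

lemma rtrancl_adj_mono: "U \<subseteq> U' \<Longrightarrow> (x,y) \<in> (adj_in E U)\<^sup>* \<Longrightarrow> (x,y) \<in> (adj_in E U')\<^sup>*"
  using rtrancl_mono[OF adj_in_mono] by blast

lemma rtrancl_adj_in: "(x,y) \<in> (adj_in E U)\<^sup>* \<Longrightarrow> x \<in> U \<Longrightarrow> y \<in> U"
  by (induction rule: rtrancl_induct) (auto simp: adj_in_def)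

lemma comp_eq:
  assumes "(x,y) \<in> (adj_in E U)\<^sup>*"
  shows "(adj_in E U)\<^sup>* `` {x} = (adj_in E U)\<^sup>* `` {y}"
proof -
  have yx: "(y,x) \<in> (adj_in E U)\<^sup>*" using assms by (rule rtrancl_adj_sym)
  show ?thesis
  proof (intro equalityI subsetI)
    fix z assume "z \<in> (adj_in E U)\<^sup>* `` {x}"
    hence "(x,z) \<in> (adj_in E U)\<^sup>*" by simp
    hence "(y,z) \<in> (adj_in E U)\<^sup>*" by (rule rtrancl_trans[OF yx])
    thus "z \<in> (adj_in E U)\<^sup>* `` {y}" by simp
  next
    fix z assume "z \<in> (adj_in E U)\<^sup>* `` {y}"
    hence "(y,z) \<in> (adj_in E U)\<^sup>*" by simp
    hence "(x,z) \<in> (adj_in E U)\<^sup>*" by (rule rtrancl_trans[OF assms])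
    thus "z \<in> (adj_in E U)\<^sup>* `` {x}" by simp
  qed
qed

context inacc
begin

lemma inj_small:
  assumes "inj_on f A" "small (f ` A)"
  shows "small A"
proof -
  have "inv_into A f ` f ` A = A" using inv_into_image_cancel[OF assms(1)] by blast
  thus ?thesis using small_image[OF assms(2), of "inv_into A f"] by simp
qed

lemma tree_graph:
  fixes V :: "'v set" and R :: "'v rel" and E :: "'v set set"
  assumes RV: "R \<subseteq> V \<times> V"
    and irr: "\<And>x. (x,x) \<notin> R" and tr: "trans R" and wfR: "wf R"
    and lin: "\<And>x y z. (x,z)\<in>R \<Longrightarrow> (y,z)\<in>R \<Longrightarrow> x=y \<or> (x,y)\<in>R \<or> (y,x)\<in>R"
    and roots: "\<And>S. S \<subseteq> V \<Longrightarrow> small S \<Longrightarrow> V - S \<noteq> {} \<and> small {r\<in>V-S. \<forall>x. (x,r)\<in>R \<longrightarrow> x\<in>S}"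
    and chains: "\<And>C. C \<subseteq> V \<Longrightarrow> (\<forall>x\<in>C. \<forall>y\<in>C. x=y \<or> (x,y)\<in>R \<or> (y,x)\<in>R) \<Longrightarrow> small C"
    and Edef: "E = {{x,y} | x y. (x,y)\<in>R}"
  shows "kl_connected k k V E \<and> \<not> has_complete_minor k V E"
proof
  have adj: "(x,y) \<in> adj_in E U \<longleftrightarrow> x \<in> U \<and> y \<in> U \<and> ((x,y)\<in>R \<or> (y,x)\<in>R)" for x y U
    unfolding adj_in_def Edef by (auto simp: doubleton_eq_iff)
  have trR: "(x,y)\<in>R \<Longrightarrow> (y,z)\<in>R \<Longrightarrow> (x,z)\<in>R" for x y z using tr unfolding trans_def by blast
  show "kl_connected k k V E"
    unfolding kl_connected_def
  proof (intro allI impI conjI)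
    fix S assume S: "S \<subseteq> V \<and> |S| <o k"
    hence Ss: "small S" unfolding small_def by blast
    define U where "U = V - S"
    have ne: "U \<noteq> {}" using roots[of S] S Ss unfolding U_def by blast
    then obtain x where "x \<in> U" by blast
    thus "components E (V - S) \<noteq> {}" unfolding components_def U_def by blast
    define Rt where "Rt = {r\<in>V-S. \<forall>x. (x,r)\<in>R \<longrightarrow> x\<in>S}"
    have Rts: "small Rt" using roots[of S] S Ss unfolding Rt_def by blast
    have "components E U \<subseteq> (\<lambda>r. (adj_in E U)\<^sup>* `` {r} \<inter> U) ` Rt"
    proof
      fix D assume "D \<in> components E U"
      then obtain x where x: "x \<in> U" "D = (adj_in E U)\<^sup>* `` {x} \<inter> U"
        unfolding components_def by blast
      have "x \<in> D" using x by blast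
      then obtain r where r: "r \<in> D" "\<And>y. (y, r) \<in> R \<Longrightarrow> y \<notin> D"
        using wfE_min[OF wfR] by metis
      have "r \<in> Rt"
        unfolding Rt_def
      proof (intro CollectI conjI allI impI)
        show "r \<in> V - S" using r x U_def by blast
        fix p assume p: "(p, r) \<in> R"
        show "p \<in> S"
        proof (rule ccontr)
          assume "p \<notin> S"
          hence "p \<in> U" using p RV U_def by blast
          hence "(r,p) \<in> adj_in E U" using adj p r(1) x by blast
          hence "(x,p) \<in> (adj_in E U)\<^sup>*" using r(1) x by (blast intro: rtrancl_into_rtrancl)
          hence "p \<in> D" using x \<open>p \<in> U\<close> by blast
          thus False using r(2) p by blast
        qed
      qed
      moreover have "D = (adj_in E U)\<^sup>* `` {r} \<inter> U"
        using comp_eq[of x r E U] r(1) x by blast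
      ultimately show "D \<in> (\<lambda>r. (adj_in E U)\<^sup>* `` {r} \<inter> U) ` Rt" by blast
    qed
    hence "small (components E U)" using small_subset small_image[OF Rts] by blast
    thus "|components E (V - S)| <o k" unfolding small_def U_def by blast
  qed
  define le where "le x y \<longleftrightarrow> x = y \<or> (x,y) \<in> R" for x y
  have le_comp: "le a x \<Longrightarrow> le b x \<Longrightarrow> a = b \<or> (a,b)\<in>R \<or> (b,a)\<in>R" for a b x
    unfolding le_def using lin by blast
  have le_trans: "le a b \<Longrightarrow> le b c \<Longrightarrow> le a c" for a b c
    unfolding le_def using trR by blast
  have root: "\<exists>r\<in>X. \<forall>y\<in>X. le r y" if X: "connected_set E X" for X
  proof -
    obtain x where x: "x \<in> X" using X unfolding connected_set_def by blast
    have step1: "(x,y) \<in> (adj_in E X)\<^sup>* \<Longrightarrow> \<exists>m\<in>X. le m x \<and> le m y" for y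
    proof (induction rule: rtrancl_induct)
      case base thus ?case using x le_def by blast
    next
      case (step y z)
      then obtain m where m: "m \<in> X" "le m x" "le m y" by blast
      have z: "z \<in> X" and yz: "(y,z)\<in>R \<or> (z,y)\<in>R" using step(2) adj by blast+
      show ?case
      proof (cases "(y,z) \<in> R")
        case True
        hence "le m z" using m(3) le_trans le_def by blast
        thus ?thesis using m by blast
      next
        case False
        hence zy: "(z,y) \<in> R" using yz by blast
        hence "le z y" using le_def by blast
        hence "m = z \<or> (m,z)\<in>R \<or> (z,m)\<in>R" using le_comp m(3) by blast
        moreover have "(z,m)\<in>R \<Longrightarrow> ?thesis" using z m(2) le_trans le_def by blast
        ultimately show ?thesis using m le_def by blast
      qed
    qed
    define M where "M = {m\<in>X. le m x}"
    have "x \<in> M" using x M_def le_def by blast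
    then obtain m0 where m0: "m0 \<in> M" "\<And>y. (y, m0) \<in> R \<Longrightarrow> y \<notin> M"
      using wfE_min[OF wfR] by metis
    have "\<forall>y\<in>X. le m0 y"
    proof
      fix y assume "y \<in> X"
      hence "(x,y) \<in> (adj_in E X)\<^sup>*" using X x unfolding connected_set_def by blast
      then obtain m where m: "m\<in>X" "le m x" "le m y" using step1 by blast
      have "m0 = m \<or> (m0,m)\<in>R \<or> (m,m0)\<in>R" using le_comp m(2) m0(1) M_def by blast
      moreover have "(m,m0) \<notin> R" using m0(2) m M_def by blast
      ultimately show "le m0 y" using m(3) le_trans le_def by blast
    qed
    thus ?thesis using m0(1) M_def by blast
  qed
  show "\<not> has_complete_minor k V E"
  proof
    assume "has_complete_minor k V E"
    then obtain X where X1: "\<forall>u\<in>Field k. X u \<subseteq> V \<and> connected_set E (X u)"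
      and X2: "\<forall>u\<in>Field k. \<forall>w\<in>Field k. u \<noteq> w \<longrightarrow> X u \<inter> X w = {}"
      and X3: "\<forall>u\<in>Field k. \<forall>w\<in>Field k. u \<noteq> w \<longrightarrow> (\<exists>x\<in>X u. \<exists>y\<in>X w. {x, y} \<in> E)"
      unfolding has_complete_minor_def by blast
    define r where "r u = (SOME r. r \<in> X u \<and> (\<forall>y\<in>X u. le r y))" for u
    have r: "r u \<in> X u \<and> (\<forall>y\<in>X u. le (r u) y)" if "u \<in> Field k" for u
    proof -
      have "\<exists>r. r \<in> X u \<and> (\<forall>y\<in>X u. le r y)" using root X1 that by blast
      thus ?thesis unfolding r_def by (rule someI_ex)
    qed
    have inj: "inj_on r (Field k)"
    proof (rule inj_onI)
      fix u w assume u: "u \<in> Field k" and w: "w \<in> Field k" and e: "r u = r w"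
      have "r u \<in> X u" "r w \<in> X w" using r[OF u] r[OF w] by blast+
      hence "X u \<inter> X w \<noteq> {}" using e by auto
      thus "u = w" using X2 u w by blast
    qed
    have "small (r ` Field k)"
    proof (rule chains)
      show "r ` Field k \<subseteq> V" using r X1 by blast
      show "\<forall>x\<in>r ` Field k. \<forall>y\<in>r ` Field k. x = y \<or> (x, y) \<in> R \<or> (y, x) \<in> R"
      proof (intro ballI)
        fix x y assume "x \<in> r ` Field k" "y \<in> r ` Field k"
        then obtain u w where uw: "u \<in> Field k" "w \<in> Field k" "x = r u" "y = r w" by blast
        show "x = y \<or> (x, y) \<in> R \<or> (y, x) \<in> R"
        proof (cases "u = w")
          case True thus ?thesis using uw by blast
        next
          case False
          then obtain p q where pq: "p \<in> X u" "q \<in> X w" "{p,q} \<in> E" using X3 uw by blast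
          hence "(p,q) \<in> R \<or> (q,p) \<in> R" unfolding Edef by (auto simp: doubleton_eq_iff)
          moreover have "le x p" "le y q" using r uw pq by blast+
          ultimately have "(\<exists>z. le x z \<and> le y z)" using le_trans le_def by blast
          thus ?thesis using le_comp by blast
        qed
      qed
    qed
    hence "small (Field k)" using inj_small[OF inj] by blast
    thus False using not_small_Field by blast
  qed
qed

end

context inacc
begin

lemma tree_transfer:
  fixes T :: "'b set" and RT :: "'b rel" and j :: "'b \<Rightarrow> 'v"
  assumes inj: "inj_on j T"
    and RV: "RT \<subseteq> T \<times> T"
    and irr: "\<And>x. (x,x) \<notin> RT" and tr: "trans RT" and wfR: "wf RT"
    and lin: "\<And>x y z. (x,z)\<in>RT \<Longrightarrow> (y,z)\<in>RT \<Longrightarrow> x=y \<or> (x,y)\<in>RT \<or> (y,x)\<in>RT"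
    and roots: "\<And>S. S \<subseteq> T \<Longrightarrow> small S \<Longrightarrow> T - S \<noteq> {} \<and> small {r\<in>T-S. \<forall>x. (x,r)\<in>RT \<longrightarrow> x\<in>S}"
    and chains: "\<And>C. C \<subseteq> T \<Longrightarrow> (\<forall>x\<in>C. \<forall>y\<in>C. x=y \<or> (x,y)\<in>RT \<or> (y,x)\<in>RT) \<Longrightarrow> small C"
  shows "\<exists>(V::'v set) E. graph V E \<and> kl_connected k k V E \<and> \<not> has_complete_minor k V E"
proof -
  define V where "V = j ` T"
  define R where "R = {(j s, j t) | s t. (s,t) \<in> RT}"
  define E where "E = {{x,y} | x y. (x,y)\<in>R}"
  define ij where "ij = inv_into T j"
  have ijj: "ij (j s) = s" if "s \<in> T" for s using inv_into_f_f[OF inj that] ij_def by simp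
  have jij: "j (ij x) = x" if "x \<in> V" for x using f_inv_into_f that V_def ij_def by metis
  have ijT: "ij x \<in> T" if "x \<in> V" for x using inv_into_into that V_def ij_def by metis
  have Rchar: "(x,y) \<in> R \<longleftrightarrow> x \<in> V \<and> y \<in> V \<and> (ij x, ij y) \<in> RT" for x y
  proof
    assume "(x,y) \<in> R"
    then obtain s t where st: "x = j s" "y = j t" "(s,t) \<in> RT" unfolding R_def by blast
    have "s \<in> T" "t \<in> T" using st(3) RV by blast+
    thus "x \<in> V \<and> y \<in> V \<and> (ij x, ij y) \<in> RT" using st ijj V_def by auto
  next
    assume "x \<in> V \<and> y \<in> V \<and> (ij x, ij y) \<in> RT"
    thus "(x,y) \<in> R" unfolding R_def using jij by (metis (mono_tags, lifting) mem_Collect_eq)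
  qed
  have RVV: "R \<subseteq> V \<times> V" using Rchar by auto
  have irrR: "(x,x) \<notin> R" for x using Rchar irr by blast
  have trR: "trans R"
  proof (rule transI)
    fix x y z assume "(x,y) \<in> R" "(y,z) \<in> R"
    hence "x \<in> V" "z \<in> V" "(ij x, ij y) \<in> RT" "(ij y, ij z) \<in> RT" using Rchar by blast+
    moreover have "(ij x, ij z) \<in> RT" using tr calculation(3,4) unfolding trans_def by blast
    ultimately show "(x,z) \<in> R" using Rchar by blast
  qed
  have wfRR: "wf R"
  proof -
    have "R \<subseteq> inv_image RT ij" using Rchar by auto
    thus ?thesis using wf_subset wf_inv_image[OF wfR] by blast
  qed
  have linR: "x=y \<or> (x,y)\<in>R \<or> (y,x)\<in>R" if "(x,z)\<in>R" "(y,z)\<in>R" for x y z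
  proof -
    have xy: "x \<in> V" "y \<in> V" "(ij x, ij z) \<in> RT" "(ij y, ij z) \<in> RT" using that Rchar by blast+
    hence "ij x = ij y \<or> (ij x, ij y) \<in> RT \<or> (ij y, ij x) \<in> RT" using lin by blast
    moreover have "ij x = ij y \<Longrightarrow> x = y" using jij xy by metis
    ultimately show ?thesis using Rchar xy by blast
  qed
  have rootsR: "V - S \<noteq> {} \<and> small {r\<in>V-S. \<forall>x. (x,r)\<in>R \<longrightarrow> x\<in>S}" if S: "S \<subseteq> V" "small S" for S
  proof -
    define S' where "S' = ij ` S"
    have S'T: "S' \<subseteq> T" using ijT S S'_def by blast
    have S's: "small S'" using small_image S S'_def by blast
    have memS: "j t \<in> S \<longleftrightarrow> t \<in> S'" if "t \<in> T" for t
    proof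
      assume "j t \<in> S" thus "t \<in> S'" using ijj[OF that] S'_def by force
    next
      assume "t \<in> S'" then obtain x where "x \<in> S" "t = ij x" using S'_def by blast
      thus "j t \<in> S" using jij S by auto
    qed
    obtain t where t: "t \<in> T - S'" using roots[OF S'T S's] by blast
    hence "j t \<in> V - S" using memS V_def by blast
    hence ne: "V - S \<noteq> {}" by blast
    have "{r\<in>V-S. \<forall>x. (x,r)\<in>R \<longrightarrow> x\<in>S} \<subseteq> j ` {r\<in>T-S'. \<forall>x. (x,r)\<in>RT \<longrightarrow> x\<in>S'}"
    proof
      fix r assume r: "r \<in> {r\<in>V-S. \<forall>x. (x,r)\<in>R \<longrightarrow> x\<in>S}"
      hence rV: "r \<in> V" "r \<notin> S" by blast+
      have "ij r \<in> T" using ijT rV by blast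
      moreover have "ij r \<notin> S'" using memS[of "ij r"] jij[OF rV(1)] rV(2) calculation by simp
      ultimately have irT: "ij r \<in> T - S'" by blast
      have "\<forall>x. (x, ij r)\<in>RT \<longrightarrow> x\<in>S'"
      proof (intro allI impI)
        fix x assume x: "(x, ij r) \<in> RT"
        hence xT: "x \<in> T" using RV by blast
        have "j x \<in> V" using xT V_def by blast
        moreover have "(ij (j x), ij r) \<in> RT" using ijj[OF xT] x by simp
        ultimately have "(j x, r) \<in> R" using Rchar rV(1) by blast
        hence "j x \<in> S" using r by blast
        thus "x \<in> S'" using memS xT by blast
      qed
      hence "ij r \<in> {r\<in>T-S'. \<forall>x. (x,r)\<in>RT \<longrightarrow> x\<in>S'}" using irT by blast
      hence "j (ij r) \<in> j ` {r\<in>T-S'. \<forall>x. (x,r)\<in>RT \<longrightarrow> x\<in>S'}" by (rule imageI)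
      thus "r \<in> j ` {r\<in>T-S'. \<forall>x. (x,r)\<in>RT \<longrightarrow> x\<in>S'}" using jij[OF rV(1)] by simp
    qed
    moreover have "small {r\<in>T-S'. \<forall>x. (x,r)\<in>RT \<longrightarrow> x\<in>S'}" using roots[OF S'T S's] by blast
    ultimately have "small {r\<in>V-S. \<forall>x. (x,r)\<in>R \<longrightarrow> x\<in>S}" using small_subset[OF small_image] by blast
    thus ?thesis using ne by blast
  qed
  have chainsR: "small C" if C: "C \<subseteq> V" "\<forall>x\<in>C. \<forall>y\<in>C. x=y \<or> (x,y)\<in>R \<or> (y,x)\<in>R" for C
  proof -
    have "ij ` C \<subseteq> T" using ijT C by blast
    moreover have "\<forall>x\<in>ij ` C. \<forall>y\<in>ij ` C. x=y \<or> (x,y)\<in>RT \<or> (y,x)\<in>RT"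
    proof (intro ballI)
      fix x y assume "x \<in> ij ` C" "y \<in> ij ` C"
      then obtain a b where ab: "a \<in> C" "b \<in> C" "x = ij a" "y = ij b" by blast
      have "a = b \<or> (a,b)\<in>R \<or> (b,a)\<in>R" using C(2) ab by blast
      thus "x=y \<or> (x,y)\<in>RT \<or> (y,x)\<in>RT" using Rchar ab by blast
    qed
    ultimately have "small (ij ` C)" by (rule chains)
    hence "small (j ` ij ` C)" by (rule small_image)
    moreover have "j ` ij ` C = C" using jij C by force
    ultimately show ?thesis by simp
  qed
  have G: "graph V E" unfolding graph_def E_def using RVV irrR by blast
  have "kl_connected k k V E \<and> \<not> has_complete_minor k V E"
    by (rule tree_graph[OF RVV irrR trR wfRR linR rootsR chainsR E_def]) blast+
  thus ?thesis using G by blast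
qed

end

context inacc
begin

lemma nonWC_graph:
  fixes c :: "'a set \<Rightarrow> bool"
  assumes noH: "\<And>H b. H \<subseteq> Field k \<Longrightarrow> |H| =o k \<Longrightarrow> \<forall>x\<in>H. \<forall>y\<in>H. x \<noteq> y \<longrightarrow> c {x,y} = b \<Longrightarrow> False"
    and card: "|Field k| \<le>o |UNIV :: 'v set|"
  shows "\<exists>(V::'v set) E. graph V E \<and> kl_connected k k V E \<and> \<not> has_complete_minor k V E"
proof -
  define seg where "seg \<beta> = {\<gamma>. lt \<gamma> \<beta>}" for \<beta>
  define node where "node \<alpha> \<beta> = (\<beta>, {\<gamma>. lt \<gamma> \<beta> \<and> c {\<gamma>,\<alpha>}})" for \<alpha> \<beta>
  define T where "T = {node \<alpha> \<beta> | \<alpha> \<beta>. (\<beta>,\<alpha>) \<in> k}"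
  define RT where "RT = {(s,t). s \<in> T \<and> t \<in> T \<and> lt (fst s) (fst t) \<and> snd s = snd t \<inter> seg (fst s)}"
  have seg_mono: "seg a \<subseteq> seg b" if "lt a b" for a b
    using that lt_trans unfolding seg_def by blast
  have Tfst: "fst t \<in> Field k" if "t \<in> T" for t
    using that le_Field unfolding T_def node_def by auto
  have Tsnd: "snd t \<subseteq> seg (fst t)" if "t \<in> T" for t
    using that unfolding T_def node_def seg_def by auto
  have Tdown: "node \<alpha> g \<in> T \<and> (node \<alpha> g, node \<alpha> \<beta>) \<in> RT" if ba: "(\<beta>,\<alpha>) \<in> k" and gb: "lt g \<beta>" for \<alpha> \<beta> g
  proof -
    have "lt g \<alpha>" using lt_le_trans[OF gb ba] .
    hence T1: "node \<alpha> g \<in> T" unfolding T_def using lt_imp_le by blast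
    have T2: "node \<alpha> \<beta> \<in> T" unfolding T_def using ba by blast
    have "{\<gamma>. lt \<gamma> g \<and> c {\<gamma>,\<alpha>}} = {\<gamma>. lt \<gamma> \<beta> \<and> c {\<gamma>,\<alpha>}} \<inter> seg g"
      unfolding seg_def using lt_trans[OF _ gb] by blast
    thus ?thesis using T1 T2 gb unfolding RT_def node_def by simp
  qed
  have RV: "RT \<subseteq> T \<times> T" unfolding RT_def by blast
  have irr: "(x,x) \<notin> RT" for x unfolding RT_def using lt_irrefl by blast
  have tr: "trans RT"
  proof (rule transI)
    fix x y z assume xy: "(x,y) \<in> RT" and yz: "(y,z) \<in> RT"
    have l1: "lt (fst x) (fst y)" and l2: "lt (fst y) (fst z)" using xy yz unfolding RT_def by blast+
    have "snd x = snd y \<inter> seg (fst x)" "snd y = snd z \<inter> seg (fst y)" using xy yz unfolding RT_def by blast+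
    moreover have "seg (fst x) \<subseteq> seg (fst y)" using seg_mono[OF l1] .
    ultimately have "snd x = snd z \<inter> seg (fst x)" by blast
    thus "(x,z) \<in> RT" using xy yz lt_trans[OF l1 l2] unfolding RT_def by blast
  qed
  have wfR: "wf RT"
  proof -
    have "RT \<subseteq> inv_image {(a,b). lt a b} fst" unfolding RT_def by auto
    thus ?thesis using wf_subset wf_inv_image[OF wf_lt] by blast
  qed
  have lin: "x=y \<or> (x,y)\<in>RT \<or> (y,x)\<in>RT" if xz: "(x,z)\<in>RT" and yz: "(y,z)\<in>RT" for x y z
  proof -
    have xT: "x \<in> T" and yT: "y \<in> T" using xz yz RV by blast+
    have sx: "snd x = snd z \<inter> seg (fst x)" and sy: "snd y = snd z \<inter> seg (fst y)"
      using xz yz unfolding RT_def by blast+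
    have "lt (fst x) (fst y) \<or> fst x = fst y \<or> lt (fst y) (fst x)" using total Tfst xT yT by blast
    moreover
    { assume l: "lt (fst x) (fst y)"
      have "snd x = snd y \<inter> seg (fst x)" using sx sy seg_mono[OF l] by blast
      hence "(x,y) \<in> RT" unfolding RT_def using xT yT l by blast }
    moreover
    { assume l: "lt (fst y) (fst x)"
      have "snd y = snd x \<inter> seg (fst y)" using sx sy seg_mono[OF l] by blast
      hence "(y,x) \<in> RT" unfolding RT_def using xT yT l by blast }
    moreover
    { assume l: "fst x = fst y"
      hence "snd x = snd y" using sx sy by simp
      hence "x = y" using l by (simp add: prod_eq_iff) }
    ultimately show ?thesis by blast
  qed
  have roots: "T - S \<noteq> {} \<and> small {r\<in>T-S. \<forall>x. (x,r)\<in>RT \<longrightarrow> x\<in>S}" if S: "S \<subseteq> T" "small S" for S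
  proof
    have fS: "fst ` S \<subseteq> Field k" using S Tfst by blast
    have fSs: "small (fst ` S)" using small_image[OF S(2)] .
    obtain g where g: "g \<in> Field k" "\<forall>s\<in>fst ` S. lt s g" using bounded[OF fS fSs] by blast
    show "T - S \<noteq> {}"
    proof
      assume TS: "T - S = {}"
      have "Field k \<subseteq> fst ` S"
      proof
        fix b assume b: "b \<in> Field k"
        have "node b b \<in> T" unfolding T_def using le_refl[OF b] by blast
        hence "node b b \<in> S" using TS by blast
        hence "fst (node b b) \<in> fst ` S" by (rule imageI)
        thus "b \<in> fst ` S" unfolding node_def by simp
      qed
      hence "small (Field k)" using small_subset[OF fSs] by blast
      thus False using not_small_Field by blast
    qed
    have "{r\<in>T-S. \<forall>x. (x,r)\<in>RT \<longrightarrow> x\<in>S} \<subseteq> {b. (b,g) \<in> k} \<times> Pow {b. (b,g) \<in> k}"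
    proof
      fix r assume r: "r \<in> {r\<in>T-S. \<forall>x. (x,r)\<in>RT \<longrightarrow> x\<in>S}"
      then obtain \<alpha> \<beta> where ab: "(\<beta>,\<alpha>) \<in> k" "r = node \<alpha> \<beta>" unfolding T_def by blast
      have bF: "\<beta> \<in> Field k" using le_Field[OF ab(1)] by blast
      have "\<not> lt g \<beta>"
      proof
        assume gb: "lt g \<beta>"
        hence "(node \<alpha> g, r) \<in> RT" using Tdown[OF ab(1) gb] ab(2) by blast
        hence "node \<alpha> g \<in> S" using r by blast
        hence "lt g g" using g(2) unfolding node_def by force
        thus False using lt_irrefl by blast
      qed
      hence bg: "(\<beta>,g) \<in> k" using not_lt[OF g(1) bF] by blast
      have "fst r = \<beta>" using ab(2) unfolding node_def by simp
      moreover have "snd r \<subseteq> {b. (b,g) \<in> k}"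
      proof
        fix b assume "b \<in> snd r"
        hence "lt b \<beta>" using ab(2) unfolding node_def by simp
        thus "b \<in> {b. (b,g) \<in> k}" using lt_imp_le[OF lt_le_trans[OF _ bg]] by blast
      qed
      ultimately show "r \<in> {b. (b,g) \<in> k} \<times> Pow {b. (b,g) \<in> k}" using bg by (simp add: mem_Times_iff)
    qed
    moreover have "small ({b. (b,g) \<in> k} \<times> Pow {b. (b,g) \<in> k})"
      using small_Times[OF small_under[OF g(1)] small_Pow[OF small_under[OF g(1)]]] .
    ultimately show "small {r\<in>T-S. \<forall>x. (x,r)\<in>RT \<longrightarrow> x\<in>S}" using small_subset by blast
  qed
  have chains: "small C" if C: "C \<subseteq> T" "\<forall>x\<in>C. \<forall>y\<in>C. x=y \<or> (x,y)\<in>RT \<or> (y,x)\<in>RT" for C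
  proof (rule ccontr)
    assume nC: "\<not> small C"
    have injf: "inj_on fst C"
    proof (rule inj_onI)
      fix x y assume "x \<in> C" "y \<in> C" "fst x = fst y"
      thus "x = y" using C(2) lt_irrefl unfolding RT_def by force
    qed
    have nfC: "\<not> small (fst ` C)" using inj_small[OF injf] nC by blast
    have fC: "fst ` C \<subseteq> Field k" using C(1) Tfst by blast
    define F where "F = \<Union> (snd ` C)"
    have Fchar: "snd t = F \<inter> seg (fst t)" if t: "t \<in> C" for t
    proof
      show "snd t \<subseteq> F \<inter> seg (fst t)" using Tsnd t C(1) F_def by blast
      show "F \<inter> seg (fst t) \<subseteq> snd t"
      proof
        fix \<gamma> assume "\<gamma> \<in> F \<inter> seg (fst t)"
        then obtain t' where t': "t' \<in> C" "\<gamma> \<in> snd t'" "\<gamma> \<in> seg (fst t)" unfolding F_def by blast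
        have "t' = t \<or> (t',t) \<in> RT \<or> (t,t') \<in> RT" using C(2) t t'(1) by blast
        thus "\<gamma> \<in> snd t" using t' unfolding RT_def by blast
      qed
    qed
    have wex: "\<exists>\<alpha>. lt \<beta> \<alpha> \<and> (\<forall>\<delta>. lt \<delta> \<beta> \<longrightarrow> (\<delta> \<in> F \<longleftrightarrow> c {\<delta>,\<alpha>}))" if b: "\<beta> \<in> Field k" for \<beta>
    proof -
      obtain b' where b': "b' \<in> fst ` C" "lt \<beta> b'" using notsmall_unbounded[OF fC nfC b] by blast
      then obtain t where t: "t \<in> C" "fst t = b'" by blast
      then obtain \<alpha> \<beta>' where ab: "(\<beta>',\<alpha>) \<in> k" "t = node \<alpha> \<beta>'" using C(1) unfolding T_def by blast
      have bb: "\<beta>' = b'" using ab(2) t(2) unfolding node_def by simp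
      have st: "{\<gamma>. lt \<gamma> b' \<and> c {\<gamma>,\<alpha>}} = F \<inter> seg b'" using Fchar[OF t(1)] ab(2) bb t(2) unfolding node_def by simp
      have "\<forall>\<delta>. lt \<delta> \<beta> \<longrightarrow> (\<delta> \<in> F \<longleftrightarrow> c {\<delta>,\<alpha>})"
      proof (intro allI impI)
        fix \<delta> assume "lt \<delta> \<beta>"
        hence d: "lt \<delta> b'" using lt_trans b'(2) by blast
        hence "\<delta> \<in> seg b'" unfolding seg_def by simp
        thus "\<delta> \<in> F \<longleftrightarrow> c {\<delta>,\<alpha>}" using st d by blast
      qed
      moreover have "lt \<beta> \<alpha>" using lt_le_trans[OF b'(2)] ab(1) bb by blast
      ultimately show ?thesis by blast
    qed
    define w where "w \<beta> = (SOME \<alpha>. lt \<beta> \<alpha> \<and> (\<forall>\<delta>. lt \<delta> \<beta> \<longrightarrow> (\<delta> \<in> F \<longleftrightarrow> c {\<delta>,\<alpha>})))" for \<beta>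
    have wprop: "lt \<beta> (w \<beta>) \<and> (\<forall>\<delta>. lt \<delta> \<beta> \<longrightarrow> (\<delta> \<in> F \<longleftrightarrow> c {\<delta>,w \<beta>}))" if "\<beta> \<in> Field k" for \<beta>
      unfolding w_def by (rule someI_ex[OF wex[OF that]])
    have wF: "w \<beta> \<in> Field k" if "\<beta> \<in> Field k" for \<beta> using wprop[OF that] lt_Field by blast
    define E' where "E' = {\<gamma> \<in> Field k. \<forall>\<eta>. lt \<eta> \<gamma> \<longrightarrow> lt (w \<eta>) \<gamma>}"
    have E'F: "E' \<subseteq> Field k" unfolding E'_def by blast
    have "\<forall>a\<in>Field k. \<exists>b\<in>E'. lt a b"
    proof
      fix a assume a: "a \<in> Field k"
      obtain g where "g \<in> Field k" "lt a g" "\<forall>x. lt x g \<longrightarrow> lt (w x) g" using closure_point[of w a, OF wF a] by blast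
      thus "\<exists>b\<in>E'. lt a b" unfolding E'_def by blast
    qed
    hence nE': "\<not> small E'" using unbounded_notsmall[OF E'F] by blast
    have wmono: "lt (w g1) (w g2)" if "g1 \<in> E'" "g2 \<in> E'" "lt g1 g2" for g1 g2
    proof -
      have "lt (w g1) g2" using that unfolding E'_def by blast
      moreover have "g2 \<in> Field k" using that(2) E'F by blast
      hence "lt g2 (w g2)" using wprop by blast
      ultimately show ?thesis using lt_trans by blast
    qed
    have wcol: "c {w g1, w g2} = (w g1 \<in> F)" if "g1 \<in> E'" "g2 \<in> E'" "lt g1 g2" for g1 g2
    proof -
      have "lt (w g1) g2" using that unfolding E'_def by blast
      moreover have "g2 \<in> Field k" using that(2) E'F by blast
      ultimately have "w g1 \<in> F \<longleftrightarrow> c {w g1, w g2}" using wprop by blast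
      thus ?thesis by simp
    qed
    have winj: "inj_on w E'"
    proof (rule inj_onI)
      fix x y assume xy: "x \<in> E'" "y \<in> E'" "w x = w y"
      show "x = y"
      proof (rule ccontr)
        assume "x \<noteq> y"
        hence "lt x y \<or> lt y x" using total xy E'F by blast
        moreover
        { assume "lt x y" hence "lt (w x) (w y)" using wmono xy by blast
          hence False using xy(3) lt_irrefl by simp }
        moreover
        { assume "lt y x" hence "lt (w y) (w x)" using wmono xy by blast
          hence False using xy(3) lt_irrefl by simp }
        ultimately show False by blast
      qed
    qed
    have nW: "\<not> small (w ` E')" using inj_small[OF winj] nE' by blast
    define H where "H b = {x \<in> w ` E'. (x \<in> F) = b}" for b
    have "w ` E' = H True \<union> H False" unfolding H_def by blast
    hence "\<not> small (H True) \<or> \<not> small (H False)" using nW small_Un[of "H True" "H False"] by auto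
    then obtain b where nH: "\<not> small (H b)" by blast
    have HF: "H b \<subseteq> Field k" unfolding H_def using wF E'F by blast
    have isoH: "|H b| =o k" using notsmall_iso[OF HF nH] .
    have "\<forall>x\<in>H b. \<forall>y\<in>H b. x \<noteq> y \<longrightarrow> c {x,y} = b"
    proof (intro ballI impI)
      fix x y assume x: "x \<in> H b" and y: "y \<in> H b" and xy: "x \<noteq> y"
      obtain g1 where g1: "g1 \<in> E'" "x = w g1" using x unfolding H_def by blast
      obtain g2 where g2: "g2 \<in> E'" "y = w g2" using y unfolding H_def by blast
      have "g1 \<noteq> g2" using xy g1 g2 by blast
      hence "lt g1 g2 \<or> lt g2 g1" using total g1 g2 E'F by blast
      moreover
      { assume "lt g1 g2"
        hence "c {x,y} = (x \<in> F)" using wcol g1 g2 by blast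
        hence "c {x,y} = b" using x unfolding H_def by blast }
      moreover
      { assume "lt g2 g1"
        hence "c {y,x} = (y \<in> F)" using wcol g1 g2 by blast
        hence "c {x,y} = b" using y unfolding H_def by (simp add: insert_commute) }
      ultimately show "c {x,y} = b" by blast
    qed
    thus False using noH[OF HF isoH] by blast
  qed
  have "T \<subseteq> (\<lambda>(\<alpha>,\<beta>). node \<alpha> \<beta>) ` (Field k \<times> Field k)"
    unfolding T_def using le_Field by fastforce
  hence A: "|T| \<le>o |(\<lambda>(\<alpha>,\<beta>). node \<alpha> \<beta>) ` (Field k \<times> Field k)|" by (rule card_of_mono1)
  have B: "|(\<lambda>(\<alpha>,\<beta>). node \<alpha> \<beta>) ` (Field k \<times> Field k)| \<le>o |Field k \<times> Field k|" by (rule card_of_image)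
  have C: "|Field k \<times> Field k| =o |Field k|" by (rule card_of_Times_same_infinite[OF INF])
  have "|T| \<le>o |Field k \<times> Field k|" by (rule ordLeq_transitive[OF A B])
  hence "|T| \<le>o |Field k|" by (rule ordLeq_ordIso_trans[OF _ C])
  hence "|T| \<le>o |UNIV :: 'v set|" by (rule ordLeq_transitive[OF _ card])
  hence "\<exists>f :: 'a \<times> 'a set \<Rightarrow> 'v. inj_on f T \<and> f ` T \<subseteq> UNIV" by (rule iffD2[OF card_of_ordLeq])
  then obtain j :: "'a \<times> 'a set \<Rightarrow> 'v" where j: "inj_on j T" by blast
  show ?thesis by (rule tree_transfer[OF j RV irr tr wfR lin roots chains]) blast+
qed

end

lemma path_set:
  assumes "(x,y) \<in> (adj_in E U)\<^sup>*" "x \<in> U"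
  shows "\<exists>P. finite P \<and> P \<subseteq> U \<and> x \<in> P \<and> y \<in> P \<and> (\<forall>v\<in>P. (x,v) \<in> (adj_in E P)\<^sup>*)"
  using assms(1)
proof (induction rule: rtrancl_induct)
  case base
  have "(x,x) \<in> (adj_in E {x})\<^sup>*" by (rule rtrancl_refl)
  thus ?case using assms(2) by blast
next
  case (step y z)
  then obtain P where P: "finite P" "P \<subseteq> U" "x \<in> P" "y \<in> P" "\<forall>v\<in>P. (x,v) \<in> (adj_in E P)\<^sup>*" by blast
  have yz: "y \<in> U" "z \<in> U" "{y,z} \<in> E" using step(2) unfolding adj_in_def by blast+
  define P' where "P' = insert z P"
  have sub: "P \<subseteq> P'" unfolding P'_def by blast
  have "\<forall>v\<in>P'. (x,v) \<in> (adj_in E P')\<^sup>*"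
  proof
    fix v assume "v \<in> P'"
    hence "v = z \<or> v \<in> P" unfolding P'_def by blast
    moreover
    { assume "v \<in> P"
      hence "(x,v) \<in> (adj_in E P)\<^sup>*" using P(5) by blast
      hence "(x,v) \<in> (adj_in E P')\<^sup>*" by (rule rtrancl_adj_mono[OF sub]) }
    moreover
    { assume v: "v = z"
      have "(x,y) \<in> (adj_in E P)\<^sup>*" using P(4,5) by blast
      hence "(x,y) \<in> (adj_in E P')\<^sup>*" by (rule rtrancl_adj_mono[OF sub])
      moreover have "(y,z) \<in> adj_in E P'" unfolding adj_in_def P'_def using P(4) yz(3) by blast
      ultimately have "(x,v) \<in> (adj_in E P')\<^sup>*" unfolding v by (rule rtrancl_into_rtrancl) }
    ultimately show "(x,v) \<in> (adj_in E P')\<^sup>*" by blast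
  qed
  moreover have "finite P'" "P' \<subseteq> U" "x \<in> P'" "z \<in> P'" using P yz unfolding P'_def by auto
  ultimately show ?case by blast
qed

lemma path_set2:
  assumes "(x,y) \<in> (adj_in E U)\<^sup>*" "x \<in> U"
  shows "\<exists>P. finite P \<and> P \<subseteq> U \<and> x \<in> P \<and> y \<in> P \<and> (x,y) \<in> (adj_in E P)\<^sup>*"
  using path_set[OF assms] by blast

context inacc
begin

lemma reduction:
  fixes V :: "'v set" and E :: "'v set set"
  assumes klc: "kl_connected k k V E"
  shows "\<exists>V' e. V' \<subseteq> V \<and> bij_betw e (Field k) V' \<and> kl_connected k k V' E"
proof -
  have klS: "components E (V-S) \<noteq> {} \<and> small (components E (V-S))" if "S \<subseteq> V" "small S" for S
    using klc that unfolding kl_connected_def small_def by blast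
  have nV: "\<not> small V"
  proof
    assume "small V"
    hence "components E (V-V) \<noteq> {}" using klS by blast
    thus False unfolding components_def by simp
  qed
  obtain e0 where e0: "inj_on e0 (Field k)" "e0 ` Field k \<subseteq> V" using not_small_inj[OF nV] by blast
  define pth where "pth S x y = (SOME P. finite P \<and> P \<subseteq> V - S \<and> x \<in> P \<and> y \<in> P \<and> (x,y) \<in> (adj_in E P)\<^sup>*)" for S x y
  have pth: "finite (pth S x y) \<and> pth S x y \<subseteq> V - S \<and> x \<in> pth S x y \<and> y \<in> pth S x y \<and> (x,y) \<in> (adj_in E (pth S x y))\<^sup>*"
    if "x \<in> V - S" "(x,y) \<in> (adj_in E (V-S))\<^sup>*" for S x y
    unfolding pth_def by (rule someI_ex[OF path_set2[OF that(2,1)]])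
  define Ix where "Ix B = {(S,x,y). S \<subseteq> B \<and> x \<in> B - S \<and> y \<in> B - S \<and> (x,y) \<in> (adj_in E (V-S))\<^sup>*}" for B
  define Fc where "Fc B = B \<union> (\<Union>p\<in>Ix B. pth (fst p) (fst (snd p)) (snd (snd p)))" for B
  have Fc_sub: "Fc B \<subseteq> V" if "B \<subseteq> V" for B
  proof -
    have "pth (fst p) (fst (snd p)) (snd (snd p)) \<subseteq> V" if "p \<in> Ix B" for p
    proof -
      obtain S x y where p: "p = (S,x,y)" by (cases p) blast
      have "x \<in> V - S" "(x,y) \<in> (adj_in E (V-S))\<^sup>*" using that \<open>B \<subseteq> V\<close> unfolding Ix_def p by blast+
      thus ?thesis using pth[of x S y] p by auto
    qed
    thus ?thesis unfolding Fc_def using that by blast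
  qed
  have Fc_small: "small (Fc B)" if "B \<subseteq> V" "small B" for B
  proof -
    have "Ix B \<subseteq> Pow B \<times> B \<times> B" unfolding Ix_def by blast
    moreover have "small (Pow B \<times> B \<times> B)" using small_Times[OF small_Pow[OF that(2)] small_Times[OF that(2) that(2)]] .
    ultimately have sI: "small (Ix B)" by (rule small_subset[rotated])
    have "small (pth (fst p) (fst (snd p)) (snd (snd p)))" if "p \<in> Ix B" for p
    proof -
      obtain S x y where p: "p = (S,x,y)" by (cases p) blast
      have "x \<in> V - S" "(x,y) \<in> (adj_in E (V-S))\<^sup>*" using that \<open>B \<subseteq> V\<close> unfolding Ix_def p by blast+
      hence "finite (pth S x y)" using pth[of x S y] by blast
      thus ?thesis using p small_finite by simp
    qed
    hence "small (\<Union>p\<in>Ix B. pth (fst p) (fst (snd p)) (snd (snd p)))" by (rule small_UN[OF sI])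
    thus ?thesis unfolding Fc_def by (rule small_Un[OF that(2)])
  qed
  define H where "H f \<alpha> = Fc (insert (e0 \<alpha>) (\<Union>\<beta>\<in>{\<beta>. lt \<beta> \<alpha>}. f \<beta>))" for f \<alpha>
  define A where "A = wfrec {(a,b). lt a b} H"
  have A_eq: "A \<alpha> = Fc (insert (e0 \<alpha>) (\<Union>\<beta>\<in>{\<beta>. lt \<beta> \<alpha>}. A \<beta>))" for \<alpha>
  proof -
    have "A \<alpha> = H (cut A {(a,b). lt a b} \<alpha>) \<alpha>" unfolding A_def by (rule wfrec[OF wf_lt])
    moreover have "(\<Union>\<beta>\<in>{\<beta>. lt \<beta> \<alpha>}. cut A {(a,b). lt a b} \<alpha> \<beta>) = (\<Union>\<beta>\<in>{\<beta>. lt \<beta> \<alpha>}. A \<beta>)"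
      by (auto simp: cut_apply)
    ultimately show ?thesis unfolding H_def by simp
  qed
  have A_prop: "\<alpha> \<in> Field k \<longrightarrow> small (A \<alpha>) \<and> A \<alpha> \<subseteq> V" for \<alpha>
  proof (induction \<alpha> rule: wf_induct[OF wf_lt])
    case (1 \<alpha>)
    show ?case
    proof
      assume a: "\<alpha> \<in> Field k"
      define B where "B = insert (e0 \<alpha>) (\<Union>\<beta>\<in>{\<beta>. lt \<beta> \<alpha>}. A \<beta>)"
      have IH: "small (A \<beta>) \<and> A \<beta> \<subseteq> V" if "lt \<beta> \<alpha>" for \<beta> using 1 that lt_Field by blast
      have "small (\<Union>\<beta>\<in>{\<beta>. lt \<beta> \<alpha>}. A \<beta>)" by (rule small_UN[OF small_underS[OF a]]) (use IH in blast)
      hence sB: "small B" unfolding B_def by (rule small_insert)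
      have BV: "B \<subseteq> V" unfolding B_def using IH e0(2) a by blast
      show "small (A \<alpha>) \<and> A \<alpha> \<subseteq> V" using A_eq[of \<alpha>] Fc_small[OF BV sB] Fc_sub[OF BV] unfolding B_def by simp
    qed
  qed
  have A_ext: "(\<Union>\<beta>\<in>{\<beta>. lt \<beta> \<alpha>}. A \<beta>) \<subseteq> A \<alpha>" "e0 \<alpha> \<in> A \<alpha>" for \<alpha>
    using A_eq[of \<alpha>] unfolding Fc_def by blast+
  have A_pth: "pth S x y \<subseteq> A \<alpha>" if "S \<subseteq> (\<Union>\<beta>\<in>{\<beta>. lt \<beta> \<alpha>}. A \<beta>)" "x \<in> (\<Union>\<beta>\<in>{\<beta>. lt \<beta> \<alpha>}. A \<beta>) - S"
    "y \<in> (\<Union>\<beta>\<in>{\<beta>. lt \<beta> \<alpha>}. A \<beta>) - S" "(x,y) \<in> (adj_in E (V-S))\<^sup>*" for S x y \<alpha>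
  proof -
    have "(S,x,y) \<in> Ix (insert (e0 \<alpha>) (\<Union>\<beta>\<in>{\<beta>. lt \<beta> \<alpha>}. A \<beta>))" unfolding Ix_def using that by blast
    thus ?thesis using A_eq[of \<alpha>] unfolding Fc_def by force
  qed
  define V' where "V' = (\<Union>\<alpha>\<in>Field k. A \<alpha>)"
  have V'V: "V' \<subseteq> V" unfolding V'_def using A_prop by blast
  have nV': "\<not> small V'"
  proof
    assume "small V'"
    moreover have "e0 ` Field k \<subseteq> V'" unfolding V'_def using A_ext(2) by blast
    ultimately have "small (e0 ` Field k)" by (rule small_subset)
    hence "small (Field k)" by (rule inj_small[OF e0(1)])
    thus False using not_small_Field by blast
  qed
  have X1: "|V'| \<le>o |SIGMA \<alpha> : Field k. A \<alpha>|" unfolding V'_def by (rule card_of_UNION_Sigma)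
  have X2: "|SIGMA \<alpha> : Field k. A \<alpha>| \<le>o |SIGMA \<alpha> : Field k. Field k|"
  proof (rule card_of_Sigma_mono1, rule ballI)
    fix \<alpha> assume "\<alpha> \<in> Field k"
    hence "small (A \<alpha>)" using A_prop by blast
    hence "\<exists>f. inj_on f (A \<alpha>) \<and> f ` A \<alpha> \<subseteq> Field k" by (rule small_inj)
    thus "|A \<alpha>| \<le>o |Field k|" by (rule iffD1[OF card_of_ordLeq])
  qed
  have X3: "|Field k \<times> Field k| =o |Field k|" by (rule card_of_Times_same_infinite[OF INF])
  have "|V'| \<le>o |Field k|" by (rule ordLeq_ordIso_trans[OF ordLeq_transitive[OF X1 X2] X3])
  hence "|V'| \<le>o k" by (rule ordLeq_ordIso_trans[OF _ FI])
  hence "|V'| <o k \<or> |V'| =o k" by (rule iffD1[OF ordLeq_iff_ordLess_or_ordIso])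
  hence "|V'| =o k" using nV' unfolding small_def by blast
  hence "k =o |V'|" by (rule ordIso_symmetric)
  hence "|Field k| =o |V'|" by (rule ordIso_transitive[OF FI])
  hence "\<exists>e. bij_betw e (Field k) V'" by (rule iffD2[OF card_of_ordIso])
  then obtain e where e: "bij_betw e (Field k) V'" by blast
  have closure: "(x,y) \<in> (adj_in E (V'-S))\<^sup>*"
    if S: "S \<subseteq> V'" "small S" and xy: "x \<in> V' - S" "y \<in> V' - S" "(x,y) \<in> (adj_in E (V-S))\<^sup>*" for S x y
  proof -
    define idx where "idx v = (SOME \<alpha>. \<alpha> \<in> Field k \<and> v \<in> A \<alpha>)" for v
    have idx: "idx v \<in> Field k \<and> v \<in> A (idx v)" if "v \<in> V'" for v
      unfolding idx_def by (rule someI_ex) (use that V'_def in blast)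
    define W where "W = insert x (insert y S)"
    have WV': "W \<subseteq> V'" unfolding W_def using S xy by blast
    have sW: "small W" unfolding W_def by (rule small_insert[OF small_insert[OF S(2)]])
    have "idx ` W \<subseteq> Field k" using idx WV' by blast
    moreover have "small (idx ` W)" by (rule small_image[OF sW])
    ultimately have "\<exists>g\<in>Field k. \<forall>a\<in>idx ` W. lt a g" by (rule bounded)
    then obtain g where g: "g \<in> Field k" "\<forall>a\<in>idx ` W. lt a g" by blast
    have Wsub: "W \<subseteq> (\<Union>\<beta>\<in>{\<beta>. lt \<beta> g}. A \<beta>)"
    proof
      fix v assume v: "v \<in> W"
      hence "lt (idx v) g" "v \<in> A (idx v)" using g idx WV' by blast+
      thus "v \<in> (\<Union>\<beta>\<in>{\<beta>. lt \<beta> g}. A \<beta>)" by blast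
    qed
    have "pth S x y \<subseteq> A g" by (rule A_pth) (use Wsub xy W_def in blast)+
    hence "pth S x y \<subseteq> V'" unfolding V'_def using g by blast
    moreover have "x \<in> V - S" using xy V'V by blast
    hence P: "pth S x y \<subseteq> V - S" "(x,y) \<in> (adj_in E (pth S x y))\<^sup>*" using pth[of x S y] xy(3) by blast+
    ultimately have "pth S x y \<subseteq> V' - S" by blast
    thus ?thesis by (rule rtrancl_adj_mono[OF _ P(2)])
  qed
  have "kl_connected k k V' E"
    unfolding kl_connected_def
  proof (intro allI impI conjI)
    fix S assume S0: "S \<subseteq> V' \<and> |S| <o k"
    hence S: "S \<subseteq> V'" "small S" unfolding small_def by blast+
    have "V' - S \<noteq> {}"
    proof
      assume "V' - S = {}"
      hence "V' \<subseteq> S" by blast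
      hence "small V'" by (rule small_subset[OF S(2)])
      thus False using nV' by blast
    qed
    thus "components E (V' - S) \<noteq> {}" unfolding components_def by blast
    have SV: "S \<subseteq> V" using S V'V by blast
    have "components E (V' - S) \<subseteq> (\<lambda>D. D \<inter> V') ` components E (V - S)"
    proof
      fix D assume "D \<in> components E (V' - S)"
      then obtain x where x: "x \<in> V' - S" "D = (adj_in E (V'-S))\<^sup>* `` {x} \<inter> (V' - S)"
        unfolding components_def by blast
      have xV: "x \<in> V - S" using x V'V by blast
      have "D = ((adj_in E (V-S))\<^sup>* `` {x} \<inter> (V - S)) \<inter> V'"
      proof
        show "D \<subseteq> ((adj_in E (V-S))\<^sup>* `` {x} \<inter> (V - S)) \<inter> V'"
        proof
          fix z assume "z \<in> D"
          hence z: "(x,z) \<in> (adj_in E (V'-S))\<^sup>*" "z \<in> V' - S" using x by blast+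
          have "V' - S \<subseteq> V - S" using V'V by blast
          hence "(x,z) \<in> (adj_in E (V-S))\<^sup>*" using rtrancl_adj_mono[OF _ z(1)] by blast
          thus "z \<in> ((adj_in E (V-S))\<^sup>* `` {x} \<inter> (V - S)) \<inter> V'" using z(2) V'V by blast
        qed
        show "((adj_in E (V-S))\<^sup>* `` {x} \<inter> (V - S)) \<inter> V' \<subseteq> D"
        proof
          fix z assume "z \<in> ((adj_in E (V-S))\<^sup>* `` {x} \<inter> (V - S)) \<inter> V'"
          hence z: "(x,z) \<in> (adj_in E (V-S))\<^sup>*" "z \<in> V' - S" by blast+
          have "(x,z) \<in> (adj_in E (V'-S))\<^sup>*" using closure[OF S x(1) z(2) z(1)] .
          thus "z \<in> D" using x(2) z(2) by simp
        qed
      qed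
      moreover have "(adj_in E (V-S))\<^sup>* `` {x} \<inter> (V - S) \<in> components E (V - S)"
        unfolding components_def using xV by blast
      ultimately show "D \<in> (\<lambda>D. D \<inter> V') ` components E (V - S)" by blast
    qed
    moreover have "small (components E (V - S))" using klS[OF SV S(2)] by blast
    ultimately have "small (components E (V' - S))" by (rule small_subset[OF small_image, rotated])
    thus "|components E (V' - S)| <o k" unfolding small_def .
  qed
  thus ?thesis using V'V e by blast
qed

end

locale D1 = inacc k for k :: "'a rel" +
  fixes V :: "'v set" and E :: "'v set set" and e :: "'a \<Rightarrow> 'v"
  assumes bij: "bij_betw e (Field k) V" and klc: "kl_connected k k V E"
begin

definition Sg where "Sg \<alpha> = e ` {\<beta>. lt \<beta> \<alpha>}"
definition Uu where "Uu \<alpha> = V - Sg \<alpha>"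
definition comp where "comp \<alpha> x = (adj_in E (Uu \<alpha>))\<^sup>* `` {x} \<inter> Uu \<alpha>"
definition ie where "ie = inv_into (Field k) e"

lemma e_inj: "inj_on e (Field k)" using bij unfolding bij_betw_def by blast
lemma eV: "\<beta> \<in> Field k \<Longrightarrow> e \<beta> \<in> V" using bij unfolding bij_betw_def by blast
lemma ieF: "x \<in> V \<Longrightarrow> ie x \<in> Field k"
  unfolding ie_def using bij inv_into_into unfolding bij_betw_def by metis
lemma eie: "x \<in> V \<Longrightarrow> e (ie x) = x"
  unfolding ie_def using bij f_inv_into_f unfolding bij_betw_def by metis

lemma Sg_small: "\<alpha> \<in> Field k \<Longrightarrow> small (Sg \<alpha>)"
  unfolding Sg_def by (rule small_image[OF small_underS])
lemma Sg_V: "Sg \<alpha> \<subseteq> V" unfolding Sg_def using eV lt_Field by blast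
lemma Sg_mono: "(\<alpha>,\<beta>) \<in> k \<Longrightarrow> Sg \<alpha> \<subseteq> Sg \<beta>"
  unfolding Sg_def using lt_le_trans by blast
lemma Uu_anti: "(\<alpha>,\<beta>) \<in> k \<Longrightarrow> Uu \<beta> \<subseteq> Uu \<alpha>"
  unfolding Uu_def using Sg_mono by blast
lemma Uu_V: "Uu \<alpha> \<subseteq> V" unfolding Uu_def by blast
lemma eSg: "\<beta> \<in> Field k \<Longrightarrow> e \<beta> \<in> Sg \<alpha> \<longleftrightarrow> lt \<beta> \<alpha>"
proof
  assume b: "\<beta> \<in> Field k" and "e \<beta> \<in> Sg \<alpha>"
  then obtain \<gamma> where g: "lt \<gamma> \<alpha>" "e \<beta> = e \<gamma>" unfolding Sg_def by blast
  have "\<gamma> \<in> Field k" using lt_Field g(1) by blast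
  hence "\<beta> = \<gamma>" using e_inj b g(2) unfolding inj_on_def by blast
  thus "lt \<beta> \<alpha>" using g by simp
next
  assume "lt \<beta> \<alpha>" thus "e \<beta> \<in> Sg \<alpha>" unfolding Sg_def by blast
qed
lemma eUu: "\<beta> \<in> Field k \<Longrightarrow> e \<beta> \<in> Uu \<alpha> \<longleftrightarrow> \<not> lt \<beta> \<alpha>"
  unfolding Uu_def using eSg eV by blast

lemma comps: "\<alpha> \<in> Field k \<Longrightarrow> components E (Uu \<alpha>) \<noteq> {} \<and> small (components E (Uu \<alpha>))"
proof -
  assume a: "\<alpha> \<in> Field k"
  have "Sg \<alpha> \<subseteq> V \<and> |Sg \<alpha>| <o k" using Sg_V Sg_small[OF a] unfolding small_def by blast
  hence "components E (V - Sg \<alpha>) \<noteq> {} \<and> |components E (V - Sg \<alpha>)| <o k"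
    using klc unfolding kl_connected_def by blast
  thus ?thesis unfolding Uu_def small_def by blast
qed

lemma comp_iff: "y \<in> comp \<alpha> x \<longleftrightarrow> (x,y) \<in> (adj_in E (Uu \<alpha>))\<^sup>* \<and> y \<in> Uu \<alpha>"
  unfolding comp_def by simp

lemma comp_self: "x \<in> Uu \<alpha> \<Longrightarrow> x \<in> comp \<alpha> x"
  unfolding comp_iff by simp

lemma comp_sub: "comp \<alpha> x \<subseteq> Uu \<alpha>" unfolding comp_def by blast

lemma comp_eq2: "y \<in> comp \<alpha> x \<Longrightarrow> comp \<alpha> y = comp \<alpha> x"
proof -
  assume "y \<in> comp \<alpha> x"
  hence "(x,y) \<in> (adj_in E (Uu \<alpha>))\<^sup>*" unfolding comp_iff by blast
  hence "(adj_in E (Uu \<alpha>))\<^sup>* `` {x} = (adj_in E (Uu \<alpha>))\<^sup>* `` {y}" by (rule comp_eq)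
  thus ?thesis unfolding comp_def by simp
qed

lemma comp_in: "x \<in> Uu \<alpha> \<Longrightarrow> comp \<alpha> x \<in> components E (Uu \<alpha>)"
  unfolding components_def comp_def by blast

lemma comp_components: "D \<in> components E (Uu \<alpha>) \<Longrightarrow> \<exists>x\<in>Uu \<alpha>. D = comp \<alpha> x"
  unfolding components_def comp_def by blast

lemma comp_down: "(\<gamma>,\<alpha>) \<in> k \<Longrightarrow> y \<in> comp \<alpha> x \<Longrightarrow> comp \<gamma> y = comp \<gamma> x"
proof -
  assume ga: "(\<gamma>,\<alpha>) \<in> k" and y: "y \<in> comp \<alpha> x"
  hence "(x,y) \<in> (adj_in E (Uu \<alpha>))\<^sup>*" unfolding comp_iff by blast
  hence "(x,y) \<in> (adj_in E (Uu \<gamma>))\<^sup>*" by (rule rtrancl_adj_mono[OF Uu_anti[OF ga]])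
  hence "(adj_in E (Uu \<gamma>))\<^sup>* `` {x} = (adj_in E (Uu \<gamma>))\<^sup>* `` {y}" by (rule comp_eq)
  thus ?thesis unfolding comp_def by simp
qed

lemma comp_sub_down: "(\<gamma>,\<alpha>) \<in> k \<Longrightarrow> comp \<alpha> x \<subseteq> comp \<gamma> x"
proof
  fix y assume ga: "(\<gamma>,\<alpha>) \<in> k" and y: "y \<in> comp \<alpha> x"
  hence "(x,y) \<in> (adj_in E (Uu \<alpha>))\<^sup>*" "y \<in> Uu \<alpha>" unfolding comp_iff by blast+
  hence "(x,y) \<in> (adj_in E (Uu \<gamma>))\<^sup>*" "y \<in> Uu \<gamma>"
    using rtrancl_adj_mono[OF Uu_anti[OF ga]] Uu_anti[OF ga] by blast+
  thus "y \<in> comp \<gamma> x" unfolding comp_iff by blast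
qed

definition W0 :: "'v set rel" where "W0 = (SOME r. well_order_on UNIV r)"
definition Wl where "Wl P Q \<longleftrightarrow> (P,Q) \<in> W0 \<and> P \<noteq> Q"

lemma W0: "well_order_on UNIV W0"
  unfolding W0_def by (rule someI_ex[OF well_order_on])

lemma Wl_total: "P \<noteq> Q \<Longrightarrow> Wl P Q \<or> Wl Q P"
  using W0 unfolding Wl_def well_order_on_def linear_order_on_def total_on_def by blast

lemma Wl_asym: "Wl P Q \<Longrightarrow> Wl Q P \<Longrightarrow> False"
  using W0 unfolding Wl_def well_order_on_def linear_order_on_def partial_order_on_def antisym_def by blast

definition col :: "'a set \<Rightarrow> bool" where
  "col P \<longleftrightarrow> (\<exists>a b \<delta>. P = {a,b} \<and> lt a b \<and> (\<delta>,a) \<in> k \<and> comp \<delta> (e a) \<noteq> comp \<delta> (e b)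
      \<and> (\<forall>\<gamma>. lt \<gamma> \<delta> \<longrightarrow> comp \<gamma> (e a) = comp \<gamma> (e b)) \<and> Wl (comp \<delta> (e a)) (comp \<delta> (e b)))"

lemma split_color:
  assumes a: "\<alpha> \<in> Field k"
    and d0: "(\<delta>0,\<alpha>) \<in> k" "comp \<delta>0 p \<noteq> comp \<delta>0 q" "\<forall>\<gamma>. lt \<gamma> \<delta>0 \<longrightarrow> comp \<gamma> p = comp \<gamma> q"
    and xy: "x \<in> Field k" "y \<in> Field k" "e x \<in> comp \<alpha> p" "e y \<in> comp \<alpha> q" "lt x y"
  shows "col {x,y} \<longleftrightarrow> Wl (comp \<delta>0 p) (comp \<delta>0 q)"
proof -
  have ax: "(\<alpha>,x) \<in> k"
  proof -
    have "e x \<in> Uu \<alpha>" using xy(3) comp_sub by blast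
    hence "\<not> lt x \<alpha>" using eUu xy(1) by blast
    thus ?thesis using not_lt[OF xy(1) a] by blast
  qed
  have cx: "comp \<gamma> (e x) = comp \<gamma> p" if "(\<gamma>,\<alpha>) \<in> k" for \<gamma> using comp_down[OF that xy(3)] .
  have cy: "comp \<gamma> (e y) = comp \<gamma> q" if "(\<gamma>,\<alpha>) \<in> k" for \<gamma> using comp_down[OF that xy(4)] .
  have below: "(\<gamma>,\<alpha>) \<in> k" if "lt \<gamma> \<delta>0" for \<gamma> using lt_imp_le[OF lt_le_trans[OF that d0(1)]] .
  show ?thesis
  proof
    assume "Wl (comp \<delta>0 p) (comp \<delta>0 q)"
    moreover have "(\<delta>0, x) \<in> k" using le_trans[OF d0(1) ax] .
    moreover have "comp \<delta>0 (e x) \<noteq> comp \<delta>0 (e y)" using cx[OF d0(1)] cy[OF d0(1)] d0(2) by simp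
    moreover have "\<forall>\<gamma>. lt \<gamma> \<delta>0 \<longrightarrow> comp \<gamma> (e x) = comp \<gamma> (e y)"
      using cx cy below d0(3) by simp
    ultimately show "col {x,y}" unfolding col_def using xy(5) cx[OF d0(1)] cy[OF d0(1)] by metis
  next
    assume "col {x,y}"
    then obtain a b \<delta> where w: "{x,y} = {a,b}" "lt a b" "(\<delta>,a) \<in> k" "comp \<delta> (e a) \<noteq> comp \<delta> (e b)"
      "\<forall>\<gamma>. lt \<gamma> \<delta> \<longrightarrow> comp \<gamma> (e a) = comp \<gamma> (e b)" "Wl (comp \<delta> (e a)) (comp \<delta> (e b))"
      unfolding col_def by blast
    have "(x = a \<and> y = b) \<or> (x = b \<and> y = a)" using w(1) by (auto simp: doubleton_eq_iff)
    moreover have "\<not> (x = b \<and> y = a)" using w(2) xy(5) lt_asym by blast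
    ultimately have ab: "a = x" "b = y" by blast+
    have dF: "\<delta> \<in> Field k" using le_Field[OF w(3)] by blast
    have d0F: "\<delta>0 \<in> Field k" using le_Field[OF d0(1)] by blast
    have "lt \<delta> \<delta>0 \<or> \<delta> = \<delta>0 \<or> lt \<delta>0 \<delta>" using total[OF dF d0F] .
    moreover
    { assume l: "lt \<delta>0 \<delta>"
      hence "comp \<delta>0 (e x) = comp \<delta>0 (e y)" using w(5) ab by blast
      hence False using cx[OF d0(1)] cy[OF d0(1)] d0(2) by simp }
    moreover
    { assume l: "lt \<delta> \<delta>0"
      hence "comp \<delta> p = comp \<delta> q" using d0(3) by blast
      hence "comp \<delta> (e x) = comp \<delta> (e y)" using cx[OF below[OF l]] cy[OF below[OF l]] by simp
      hence False using w(4) ab by simp }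
    ultimately have "\<delta> = \<delta>0" by blast
    thus "Wl (comp \<delta>0 p) (comp \<delta>0 q)" using w(6) ab cx[OF d0(1)] cy[OF d0(1)] by simp
  qed
qed

end

locale D1H = D1 k V E e for k :: "'a rel" and V :: "'v set" and E e +
  fixes H :: "'a set" and b :: bool
  assumes HF: "H \<subseteq> Field k" and Hiso: "|H| =o k"
    and hom: "\<forall>x\<in>H. \<forall>y\<in>H. x \<noteq> y \<longrightarrow> col {x,y} = b"
begin

definition Hc where "Hc D = {a \<in> H. e a \<in> D}"

lemma nH: "\<not> small H" using iso_notsmall[OF Hiso] .

lemma Hc_sub: "Hc D \<subseteq> Field k" unfolding Hc_def using HF by blast

lemma unique:
  assumes a: "\<alpha> \<in> Field k" and D: "Da \<in> components E (Uu \<alpha>)" "Db \<in> components E (Uu \<alpha>)"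
    and n: "\<not> small (Hc Da)" "\<not> small (Hc Db)"
  shows "Da = Db"
proof (rule ccontr)
  assume ne: "Da \<noteq> Db"
  obtain p where p: "p \<in> Uu \<alpha>" "Da = comp \<alpha> p" using comp_components[OF D(1)] by blast
  obtain q where q: "q \<in> Uu \<alpha>" "Db = comp \<alpha> q" using comp_components[OF D(2)] by blast
  define \<Sigma> where "\<Sigma> = {\<gamma>. (\<gamma>,\<alpha>) \<in> k \<and> comp \<gamma> p \<noteq> comp \<gamma> q}"
  have "\<alpha> \<in> \<Sigma>" unfolding \<Sigma>_def using le_refl[OF a] ne p q by simp
  then obtain \<delta>0 where d0: "\<delta>0 \<in> \<Sigma>" "\<forall>y. lt y \<delta>0 \<longrightarrow> y \<notin> \<Sigma>" using lt_min by blast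
  have d1: "(\<delta>0,\<alpha>) \<in> k" "comp \<delta>0 p \<noteq> comp \<delta>0 q" using d0(1) unfolding \<Sigma>_def by blast+
  have d3: "\<forall>\<gamma>. lt \<gamma> \<delta>0 \<longrightarrow> comp \<gamma> p = comp \<gamma> q"
  proof (intro allI impI)
    fix \<gamma> assume g: "lt \<gamma> \<delta>0"
    hence "(\<gamma>,\<alpha>) \<in> k" using lt_imp_le[OF lt_le_trans[OF g d1(1)]] by blast
    thus "comp \<gamma> p = comp \<gamma> q" using d0(2) g unfolding \<Sigma>_def by blast
  qed
  have d2': "comp \<delta>0 q \<noteq> comp \<delta>0 p" using d1(2) by simp
  have d3': "\<forall>\<gamma>. lt \<gamma> \<delta>0 \<longrightarrow> comp \<gamma> q = comp \<gamma> p" using d3 by simp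
  have "Hc Da \<noteq> {}" using n(1) small_empty by metis
  then obtain a1 where a1: "a1 \<in> Hc Da" by blast
  have a1F: "a1 \<in> Field k" using a1 Hc_sub by blast
  obtain b1 where b1: "b1 \<in> Hc Db" "lt a1 b1" using notsmall_unbounded[OF Hc_sub n(2) a1F] by blast
  have "Hc Db \<noteq> {}" using n(2) small_empty by metis
  then obtain b2 where b2: "b2 \<in> Hc Db" by blast
  have b2F: "b2 \<in> Field k" using b2 Hc_sub by blast
  obtain a2 where a2: "a2 \<in> Hc Da" "lt b2 a2" using notsmall_unbounded[OF Hc_sub n(1) b2F] by blast
  have "a1 \<noteq> b1" using b1(2) lt_irrefl by blast
  moreover have "a1 \<in> H" "b1 \<in> H" using a1 b1 unfolding Hc_def by blast+
  ultimately have c1: "col {a1,b1} = b" using hom by blast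
  have "b2 \<noteq> a2" using a2(2) lt_irrefl by blast
  moreover have "a2 \<in> H" "b2 \<in> H" using a2 b2 unfolding Hc_def by blast+
  ultimately have c2: "col {b2,a2} = b" using hom by blast
  have "col {a1,b1} \<longleftrightarrow> Wl (comp \<delta>0 p) (comp \<delta>0 q)"
    by (rule split_color[OF a d1 d3]) (use a1 b1 Hc_sub p q Hc_def in blast)+
  moreover have "col {b2,a2} \<longleftrightarrow> Wl (comp \<delta>0 q) (comp \<delta>0 p)"
    by (rule split_color[OF a d1(1) d2' d3']) (use a2 b2 Hc_sub p q Hc_def in blast)+
  ultimately have "Wl (comp \<delta>0 p) (comp \<delta>0 q) \<longleftrightarrow> Wl (comp \<delta>0 q) (comp \<delta>0 p)" using c1 c2 by simp
  thus False using Wl_total[OF d1(2)] Wl_asym by blast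
qed

lemma exist:
  assumes a: "\<alpha> \<in> Field k"
  shows "\<exists>D\<in>components E (Uu \<alpha>). \<not> small (Hc D)"
proof (rule ccontr)
  assume "\<not> (\<exists>D\<in>components E (Uu \<alpha>). \<not> small (Hc D))"
  hence all: "\<And>D. D \<in> components E (Uu \<alpha>) \<Longrightarrow> small (Hc D)" by blast
  have "small (\<Union>D\<in>components E (Uu \<alpha>). Hc D)" by (rule small_UN[OF conjunct2[OF comps[OF a]] all])
  moreover have "H - {\<beta>. lt \<beta> \<alpha>} \<subseteq> (\<Union>D\<in>components E (Uu \<alpha>). Hc D)"
  proof
    fix x assume x: "x \<in> H - {\<beta>. lt \<beta> \<alpha>}"
    hence xF: "x \<in> Field k" using HF by blast
    hence "e x \<in> Uu \<alpha>" using eUu x by blast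
    hence "comp \<alpha> (e x) \<in> components E (Uu \<alpha>)" "e x \<in> comp \<alpha> (e x)" using comp_in comp_self by blast+
    thus "x \<in> (\<Union>D\<in>components E (Uu \<alpha>). Hc D)" using x unfolding Hc_def by blast
  qed
  ultimately have "small (H - {\<beta>. lt \<beta> \<alpha>})" by (rule small_subset)
  hence "small ((H - {\<beta>. lt \<beta> \<alpha>}) \<union> {\<beta>. lt \<beta> \<alpha>})" by (rule small_Un[OF _ small_underS[OF a]])
  moreover have "H \<subseteq> (H - {\<beta>. lt \<beta> \<alpha>}) \<union> {\<beta>. lt \<beta> \<alpha>}" by blast
  ultimately have "small H" by (rule small_subset)
  thus False using nH by blast
qed

definition C where "C \<alpha> = (THE D. D \<in> components E (Uu \<alpha>) \<and> \<not> small (Hc D))"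

lemma C_prop: "\<alpha> \<in> Field k \<Longrightarrow> C \<alpha> \<in> components E (Uu \<alpha>) \<and> \<not> small (Hc (C \<alpha>))"
proof -
  assume a: "\<alpha> \<in> Field k"
  have "\<exists>!D. D \<in> components E (Uu \<alpha>) \<and> \<not> small (Hc D)"
    using exist[OF a] unique[OF a] by blast
  thus ?thesis unfolding C_def by (rule theI')
qed

lemma C_unique: "\<alpha> \<in> Field k \<Longrightarrow> D \<in> components E (Uu \<alpha>) \<Longrightarrow> \<not> small (Hc D) \<Longrightarrow> D = C \<alpha>"
  using unique C_prop by blast

lemma C_sub: "\<alpha> \<in> Field k \<Longrightarrow> C \<alpha> \<subseteq> Uu \<alpha>"
  using C_prop comp_components comp_sub by metis

lemma C_ne: "\<alpha> \<in> Field k \<Longrightarrow> C \<alpha> \<noteq> {}"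
proof
  assume "\<alpha> \<in> Field k" "C \<alpha> = {}"
  hence "\<not> small (Hc {})" using C_prop by metis
  moreover have "Hc {} = {}" unfolding Hc_def by blast
  hence "small (Hc {})" using small_empty by simp
  ultimately show False by blast
qed

lemma C_comp: "\<alpha> \<in> Field k \<Longrightarrow> x \<in> C \<alpha> \<Longrightarrow> C \<alpha> = comp \<alpha> x"
proof -
  assume a: "\<alpha> \<in> Field k" and x: "x \<in> C \<alpha>"
  obtain x0 where "x0 \<in> Uu \<alpha>" "C \<alpha> = comp \<alpha> x0" using comp_components C_prop[OF a] by blast
  thus ?thesis using comp_eq2 x by simp
qed

lemma C_dec:
  assumes ab: "(\<alpha>,\<beta>) \<in> k"
  shows "C \<beta> \<subseteq> C \<alpha>"
proof -
  have aF: "\<alpha> \<in> Field k" and bF: "\<beta> \<in> Field k" using le_Field[OF ab] by blast+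
  obtain x where x: "x \<in> C \<beta>" using C_ne[OF bF] by blast
  have Cb: "C \<beta> = comp \<beta> x" using C_comp[OF bF x] .
  have xU: "x \<in> Uu \<alpha>" using x C_sub[OF bF] Uu_anti[OF ab] by blast
  have sub: "C \<beta> \<subseteq> comp \<alpha> x" using Cb comp_sub_down[OF ab] by simp
  have "Hc (C \<beta>) \<subseteq> Hc (comp \<alpha> x)" using sub unfolding Hc_def by blast
  hence "\<not> small (Hc (comp \<alpha> x))" using C_prop[OF bF] small_subset by metis
  hence "comp \<alpha> x = C \<alpha>" using C_unique[OF aF comp_in[OF xU]] by blast
  thus ?thesis using sub by simp
qed

end

context D1H
begin

lemma stepU:
  assumes a: "\<alpha> \<in> Field k"
  shows "\<exists>u\<in>C \<alpha>. \<forall>\<beta>. (\<alpha>,\<beta>) \<in> k \<longrightarrow> (\<exists>z\<in>C \<beta>. {u,z} \<in> E)"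
proof (rule ccontr)
  assume "\<not> (\<exists>u\<in>C \<alpha>. \<forall>\<beta>. (\<alpha>,\<beta>) \<in> k \<longrightarrow> (\<exists>z\<in>C \<beta>. {u,z} \<in> E))"
  hence N: "\<exists>\<beta>. (\<alpha>,\<beta>) \<in> k \<and> \<not> (\<exists>z\<in>C \<beta>. {u,z} \<in> E)" if "u \<in> C \<alpha>" for u using that by blast
  define f where "f u = (SOME \<beta>. (\<alpha>,\<beta>) \<in> k \<and> \<not> (\<exists>z\<in>C \<beta>. {u,z} \<in> E))" for u
  have fp: "(\<alpha>, f u) \<in> k \<and> \<not> (\<exists>z\<in>C (f u). {u,z} \<in> E)" if "u \<in> C \<alpha>" for u
    unfolding f_def by (rule someI_ex[OF N[OF that]])
  define h where "h \<eta> = (if e \<eta> \<in> C \<alpha> then f (e \<eta>) else \<alpha>)" for \<eta>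
  have hF: "h \<eta> \<in> Field k" if "\<eta> \<in> Field k" for \<eta>
    unfolding h_def using fp le_Field a by auto
  obtain x0 where x0: "x0 \<in> C \<alpha>" using C_ne[OF a] by blast
  have x0V: "x0 \<in> V" using x0 C_sub[OF a] Uu_V by blast
  define \<eta>0 where "\<eta>0 = ie x0"
  have e0F: "\<eta>0 \<in> Field k" and e0e: "e \<eta>0 = x0" using ieF[OF x0V] eie[OF x0V] \<eta>0_def by auto
  define a0 where "a0 = (if lt \<eta>0 \<alpha> then \<alpha> else \<eta>0)"
  have a0F: "a0 \<in> Field k" unfolding a0_def using a e0F by simp
  have a01: "(\<eta>0, a0) \<in> k" unfolding a0_def using lt_imp_le le_refl[OF e0F] by auto
  have a02: "(\<alpha>, a0) \<in> k" unfolding a0_def using le_refl[OF a] not_lt[OF e0F a] by auto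
  obtain g where g: "g \<in> Field k" "lt a0 g" "\<forall>x. lt x g \<longrightarrow> lt (h x) g"
    using closure_point[of h a0, OF hF a0F] by blast
  have eg: "lt \<eta>0 g" using le_lt_trans[OF a01 g(2)] .
  have ag: "(\<alpha>, g) \<in> k" using lt_imp_le[OF le_lt_trans[OF a02 g(2)]] .
  have x0S: "x0 \<in> Sg g" using eg e0e unfolding Sg_def by blast
  have Cga: "C g \<subseteq> C \<alpha>" using C_dec[OF ag] .
  obtain z where z: "z \<in> C g" using C_ne[OF g(1)] by blast
  have Ca: "C \<alpha> = comp \<alpha> x0" using C_comp[OF a x0] .
  have "z \<in> comp \<alpha> x0" using z Cga Ca by blast
  hence zpath: "(x0, z) \<in> (adj_in E (Uu \<alpha>))\<^sup>*" unfolding comp_iff by simp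
  have claim: "y \<in> C \<alpha> \<and> y \<notin> C g" if "(x0, y) \<in> (adj_in E (Uu \<alpha>))\<^sup>*" for y
    using that
  proof (induction rule: rtrancl_induct)
    case base
    have "x0 \<notin> Uu g" using x0S unfolding Uu_def by blast
    thus ?case using x0 C_sub[OF g(1)] by blast
  next
    case (step y y')
    have yC: "y \<in> C \<alpha>" and ynC: "y \<notin> C g" using step.IH by blast+
    have adj: "y \<in> Uu \<alpha>" "y' \<in> Uu \<alpha>" "{y,y'} \<in> E" using step.hyps(2) unfolding adj_in_def by blast+
    have "(x0, y') \<in> (adj_in E (Uu \<alpha>))\<^sup>*" using rtrancl_into_rtrancl[OF step.hyps(1) step.hyps(2)] .
    hence y'C: "y' \<in> C \<alpha>" using adj(2) Ca comp_iff by simp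
    have "y' \<notin> C g"
    proof
      assume y'g: "y' \<in> C g"
      show False
      proof (cases "y \<in> Sg g")
        case True
        then obtain \<eta> where eta: "lt \<eta> g" "y = e \<eta>" unfolding Sg_def by blast
        have "h \<eta> = f y" unfolding h_def using eta(2) yC by simp
        hence "lt (f y) g" using g(3) eta(1) by metis
        hence "C g \<subseteq> C (f y)" using C_dec lt_imp_le by blast
        hence "y' \<in> C (f y)" using y'g by blast
        thus False using fp[OF yC] adj(3) by blast
      next
        case False
        have yV: "y \<in> V" using adj(1) Uu_V by blast
        hence yU: "y \<in> Uu g" using False unfolding Uu_def by blast
        have y'U: "y' \<in> Uu g" using y'g C_sub[OF g(1)] by blast
        have "(y', y) \<in> adj_in E (Uu g)" unfolding adj_in_def using yU y'U adj(3) by (simp add: insert_commute)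
        hence "(y', y) \<in> (adj_in E (Uu g))\<^sup>*" by (rule r_into_rtrancl)
        hence "y \<in> comp g y'" unfolding comp_iff using yU by simp
        moreover have "C g = comp g y'" using C_comp[OF g(1) y'g] .
        ultimately show False using ynC by blast
      qed
    qed
    thus ?case using y'C by blast
  qed
  show False using claim[OF zpath] z by blast
qed

definition u where "u \<alpha> = (SOME u. u \<in> C \<alpha> \<and> (\<forall>\<beta>. (\<alpha>,\<beta>) \<in> k \<longrightarrow> (\<exists>z\<in>C \<beta>. {u,z} \<in> E)))"

lemma u_prop: "\<alpha> \<in> Field k \<Longrightarrow> u \<alpha> \<in> C \<alpha> \<and> (\<forall>\<beta>. (\<alpha>,\<beta>) \<in> k \<longrightarrow> (\<exists>z\<in>C \<beta>. {u \<alpha>,z} \<in> E))"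
proof -
  assume a: "\<alpha> \<in> Field k"
  have "\<exists>u. u \<in> C \<alpha> \<and> (\<forall>\<beta>. (\<alpha>,\<beta>) \<in> k \<longrightarrow> (\<exists>z\<in>C \<beta>. {u,z} \<in> E))" using stepU[OF a] by blast
  thus ?thesis unfolding u_def by (rule someI_ex)
qed

definition z where "z \<alpha> \<eta> = (SOME z. z \<in> C \<alpha> \<and> {u \<eta>, z} \<in> E)"

lemma z_prop: "lt \<eta> \<alpha> \<Longrightarrow> z \<alpha> \<eta> \<in> C \<alpha> \<and> {u \<eta>, z \<alpha> \<eta>} \<in> E"
proof -
  assume l: "lt \<eta> \<alpha>"
  have "\<eta> \<in> Field k" using lt_Field l by blast
  hence "\<exists>z. z \<in> C \<alpha> \<and> {u \<eta>, z} \<in> E" using u_prop lt_imp_le[OF l] by blast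
  thus ?thesis unfolding z_def by (rule someI_ex)
qed

definition P where "P \<alpha> \<eta> = (SOME P. finite P \<and> P \<subseteq> Uu \<alpha> \<and> u \<alpha> \<in> P \<and> z \<alpha> \<eta> \<in> P \<and> (\<forall>v\<in>P. (u \<alpha>, v) \<in> (adj_in E P)\<^sup>*))"

lemma P_prop:
  assumes l: "lt \<eta> \<alpha>"
  shows "finite (P \<alpha> \<eta>) \<and> P \<alpha> \<eta> \<subseteq> C \<alpha> \<and> u \<alpha> \<in> P \<alpha> \<eta> \<and> z \<alpha> \<eta> \<in> P \<alpha> \<eta> \<and> (\<forall>v\<in>P \<alpha> \<eta>. (u \<alpha>, v) \<in> (adj_in E (P \<alpha> \<eta>))\<^sup>*)"
proof -
  have a: "\<alpha> \<in> Field k" using lt_Field l by blast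
  have uC: "u \<alpha> \<in> C \<alpha>" using u_prop[OF a] by blast
  have zC: "z \<alpha> \<eta> \<in> C \<alpha>" using z_prop[OF l] by blast
  have Ca: "C \<alpha> = comp \<alpha> (u \<alpha>)" using C_comp[OF a uC] .
  have "z \<alpha> \<eta> \<in> comp \<alpha> (u \<alpha>)" using zC Ca by simp
  hence "(u \<alpha>, z \<alpha> \<eta>) \<in> (adj_in E (Uu \<alpha>))\<^sup>*" unfolding comp_iff by simp
  moreover have "u \<alpha> \<in> Uu \<alpha>" using uC C_sub[OF a] by blast
  ultimately have "\<exists>P. finite P \<and> P \<subseteq> Uu \<alpha> \<and> u \<alpha> \<in> P \<and> z \<alpha> \<eta> \<in> P \<and> (\<forall>v\<in>P. (u \<alpha>, v) \<in> (adj_in E P)\<^sup>*)"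
    by (rule path_set)
  hence pp: "finite (P \<alpha> \<eta>) \<and> P \<alpha> \<eta> \<subseteq> Uu \<alpha> \<and> u \<alpha> \<in> P \<alpha> \<eta> \<and> z \<alpha> \<eta> \<in> P \<alpha> \<eta> \<and> (\<forall>v\<in>P \<alpha> \<eta>. (u \<alpha>, v) \<in> (adj_in E (P \<alpha> \<eta>))\<^sup>*)"
    unfolding P_def by (rule someI_ex)
  have "P \<alpha> \<eta> \<subseteq> C \<alpha>"
  proof
    fix v assume v: "v \<in> P \<alpha> \<eta>"
    have sub: "P \<alpha> \<eta> \<subseteq> Uu \<alpha>" using pp by blast
    have "(u \<alpha>, v) \<in> (adj_in E (P \<alpha> \<eta>))\<^sup>*" using pp v by blast
    hence r: "(u \<alpha>, v) \<in> (adj_in E (Uu \<alpha>))\<^sup>*" by (rule rtrancl_adj_mono[OF sub])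
    have "v \<in> Uu \<alpha>" using sub v by blast
    thus "v \<in> C \<alpha>" using r by (simp add: Ca comp_iff)
  qed
  thus ?thesis using pp by blast
qed

definition X where "X \<alpha> = insert (u \<alpha>) (\<Union>\<eta>\<in>{\<eta>. lt \<eta> \<alpha>}. P \<alpha> \<eta>)"

lemma X_sub: "\<alpha> \<in> Field k \<Longrightarrow> X \<alpha> \<subseteq> C \<alpha>"
  unfolding X_def using u_prop P_prop by blast

lemma X_small: "\<alpha> \<in> Field k \<Longrightarrow> small (X \<alpha>)"
proof -
  assume a: "\<alpha> \<in> Field k"
  have "small (\<Union>\<eta>\<in>{\<eta>. lt \<eta> \<alpha>}. P \<alpha> \<eta>)"
    by (rule small_UN[OF small_underS[OF a]]) (use P_prop small_finite in blast)
  thus ?thesis unfolding X_def by (rule small_insert)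
qed

lemma X_conn: "\<alpha> \<in> Field k \<Longrightarrow> connected_set E (X \<alpha>)"
proof -
  assume a: "\<alpha> \<in> Field k"
  have star: "(u \<alpha>, v) \<in> (adj_in E (X \<alpha>))\<^sup>*" if v: "v \<in> X \<alpha>" for v
  proof (cases "v = u \<alpha>")
    case True thus ?thesis by simp
  next
    case False
    then obtain \<eta> where eta: "lt \<eta> \<alpha>" "v \<in> P \<alpha> \<eta>" using v unfolding X_def by blast
    have r: "(u \<alpha>, v) \<in> (adj_in E (P \<alpha> \<eta>))\<^sup>*" using P_prop[OF eta(1)] eta(2) by blast
    have sub: "P \<alpha> \<eta> \<subseteq> X \<alpha>" unfolding X_def using eta(1) by blast
    show ?thesis by (rule rtrancl_adj_mono[OF sub r])
  qed
  show ?thesis unfolding connected_set_def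
  proof (intro conjI ballI)
    show "X \<alpha> \<noteq> {}" unfolding X_def by blast
    fix x y assume x: "x \<in> X \<alpha>" and y: "y \<in> X \<alpha>"
    have "(x, u \<alpha>) \<in> (adj_in E (X \<alpha>))\<^sup>*" by (rule rtrancl_adj_sym[OF star[OF x]])
    thus "(x, y) \<in> (adj_in E (X \<alpha>))\<^sup>*" by (rule rtrancl_trans[OF _ star[OF y]])
  qed
qed

lemma X_bound: "\<alpha> \<in> Field k \<Longrightarrow> \<exists>g. g \<in> Field k \<and> X \<alpha> \<subseteq> Sg g"
proof -
  assume a: "\<alpha> \<in> Field k"
  have XV: "X \<alpha> \<subseteq> V" using X_sub[OF a] C_sub[OF a] Uu_V by blast
  have "ie ` X \<alpha> \<subseteq> Field k" using ieF XV by blast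
  moreover have "small (ie ` X \<alpha>)" by (rule small_image[OF X_small[OF a]])
  ultimately have "\<exists>g\<in>Field k. \<forall>b\<in>ie ` X \<alpha>. lt b g" by (rule bounded)
  then obtain g where g: "g \<in> Field k" "\<forall>b\<in>ie ` X \<alpha>. lt b g" by blast
  have "X \<alpha> \<subseteq> Sg g"
  proof
    fix v assume v: "v \<in> X \<alpha>"
    hence "lt (ie v) g" using g by blast
    moreover have "e (ie v) = v" using eie XV v by blast
    ultimately show "v \<in> Sg g" unfolding Sg_def by force
  qed
  thus ?thesis using g by blast
qed

definition h2 where "h2 \<alpha> = (SOME g. g \<in> Field k \<and> X \<alpha> \<subseteq> Sg g)"

lemma h2_prop: "\<alpha> \<in> Field k \<Longrightarrow> h2 \<alpha> \<in> Field k \<and> X \<alpha> \<subseteq> Sg (h2 \<alpha>)"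
  unfolding h2_def by (rule someI_ex[OF X_bound])

theorem minor: "has_complete_minor k V E"
proof -
  define E' where "E' = {\<gamma> \<in> Field k. \<forall>\<eta>. lt \<eta> \<gamma> \<longrightarrow> lt (h2 \<eta>) \<gamma>}"
  have E'F: "E' \<subseteq> Field k" unfolding E'_def by blast
  have h2F: "h2 x \<in> Field k" if "x \<in> Field k" for x using h2_prop[OF that] by blast
  have "\<forall>a\<in>Field k. \<exists>b\<in>E'. lt a b"
  proof
    fix a assume a: "a \<in> Field k"
    obtain g where "g \<in> Field k" "lt a g" "\<forall>x. lt x g \<longrightarrow> lt (h2 x) g"
      using closure_point[of h2 a, OF h2F a] by blast
    thus "\<exists>b\<in>E'. lt a b" unfolding E'_def by blast
  qed
  hence "|E'| =o k" by (rule unbounded_iso[OF E'F])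
  hence "k =o |E'|" by (rule ordIso_symmetric)
  hence "|Field k| =o |E'|" by (rule ordIso_transitive[OF FI])
  hence "\<exists>g. bij_betw g (Field k) E'" by (rule iffD2[OF card_of_ordIso])
  then obtain g where g: "bij_betw g (Field k) E'" by blast
  have gE: "g x \<in> E'" if "x \<in> Field k" for x using g that unfolding bij_betw_def by blast
  have ginj: "g x \<noteq> g y" if "x \<in> Field k" "y \<in> Field k" "x \<noteq> y" for x y
    using g that unfolding bij_betw_def inj_on_def by blast
  have key: "X \<eta> \<inter> X \<alpha> = {} \<and> (\<exists>p\<in>X \<eta>. \<exists>q\<in>X \<alpha>. {p,q} \<in> E)"
    if eta: "\<eta> \<in> E'" and al: "\<alpha> \<in> E'" and l: "lt \<eta> \<alpha>" for \<eta> \<alpha>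
  proof
    have etaF: "\<eta> \<in> Field k" and aF: "\<alpha> \<in> Field k" using eta al E'F by blast+
    have "lt (h2 \<eta>) \<alpha>" using al l unfolding E'_def by blast
    hence "Sg (h2 \<eta>) \<subseteq> Sg \<alpha>" using Sg_mono lt_imp_le by blast
    hence "X \<eta> \<subseteq> Sg \<alpha>" using h2_prop[OF etaF] by blast
    moreover have "X \<alpha> \<subseteq> Uu \<alpha>" using X_sub[OF aF] C_sub[OF aF] by blast
    ultimately show "X \<eta> \<inter> X \<alpha> = {}" unfolding Uu_def by blast
    have "u \<eta> \<in> X \<eta>" unfolding X_def by blast
    moreover have "z \<alpha> \<eta> \<in> X \<alpha>" unfolding X_def using P_prop[OF l] l by blast
    moreover have "{u \<eta>, z \<alpha> \<eta>} \<in> E" using z_prop[OF l] by blast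
    ultimately show "\<exists>p\<in>X \<eta>. \<exists>q\<in>X \<alpha>. {p,q} \<in> E" by blast
  qed
  show ?thesis unfolding has_complete_minor_def
  proof (rule exI[of _ "\<lambda>x. X (g x)"], intro conjI ballI impI)
    fix x assume x: "x \<in> Field k"
    have gF: "g x \<in> Field k" using gE[OF x] E'F by blast
    show "X (g x) \<subseteq> V" using X_sub[OF gF] C_sub[OF gF] Uu_V by blast
    show "connected_set E (X (g x))" using X_conn[OF gF] .
  next
    fix x y assume x: "x \<in> Field k" and y: "y \<in> Field k" and xy: "x \<noteq> y"
    have gxy: "g x \<noteq> g y" using ginj[OF x y xy] .
    have "lt (g x) (g y) \<or> lt (g y) (g x)" using total gxy gE[OF x] gE[OF y] E'F by blast
    thus "X (g x) \<inter> X (g y) = {}" using key gE[OF x] gE[OF y] by blast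
  next
    fix x y assume x: "x \<in> Field k" and y: "y \<in> Field k" and xy: "x \<noteq> y"
    have gxy: "g x \<noteq> g y" using ginj[OF x y xy] .
    have "lt (g x) (g y) \<or> lt (g y) (g x)" using total gxy gE[OF x] gE[OF y] E'F by blast
    moreover
    { assume "lt (g x) (g y)"
      hence "\<exists>p\<in>X (g x). \<exists>q\<in>X (g y). {p,q} \<in> E" using key gE[OF x] gE[OF y] by blast }
    moreover
    { assume "lt (g y) (g x)"
      then obtain p q where "p \<in> X (g y)" "q \<in> X (g x)" "{p,q} \<in> E" using key gE[OF x] gE[OF y] by blast
      hence "\<exists>p\<in>X (g x). \<exists>q\<in>X (g y). {p,q} \<in> E" by (metis insert_commute) }
    ultimately show "\<exists>p\<in>X (g x). \<exists>q\<in>X (g y). {p,q} \<in> E" by blast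
  qed
qed

end

lemma hcm_mono:
  assumes "V' \<subseteq> V" "has_complete_minor k V' E"
  shows "has_complete_minor k V E"
proof -
  obtain X where X1: "\<forall>u\<in>Field k. X u \<subseteq> V' \<and> connected_set E (X u)"
      and X2: "\<forall>u\<in>Field k. \<forall>w\<in>Field k. u \<noteq> w \<longrightarrow> X u \<inter> X w = {}"
      and X3: "\<forall>u\<in>Field k. \<forall>w\<in>Field k. u \<noteq> w \<longrightarrow> (\<exists>x\<in>X u. \<exists>y\<in>X w. {x, y} \<in> E)"
    using assms(2) unfolding has_complete_minor_def by blast
  have "\<forall>u\<in>Field k. X u \<subseteq> V \<and> connected_set E (X u)" using X1 assms(1) by blast
  thus ?thesis unfolding has_complete_minor_def using X2 X3 by blast
qed

theorem mainTheorem11: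
  fixes k :: "'a rel"
  assumes "inaccessible k"
    and "|Field k| \<le>o |UNIV :: 'v set|"
  shows "weakly_compact k \<longleftrightarrow>
    (\<forall>(V :: 'v set) E. graph V E \<and> kl_connected k k V E \<longrightarrow> has_complete_minor k V E)"
proof -
  interpret inacc k by unfold_locales (rule assms(1))
  show ?thesis
  proof
    assume wc: "weakly_compact k"
    show "\<forall>(V :: 'v set) E. graph V E \<and> kl_connected k k V E \<longrightarrow> has_complete_minor k V E"
    proof (intro allI impI)
      fix V :: "'v set" and E assume GV: "graph V E \<and> kl_connected k k V E"
      then obtain V' e where V': "V' \<subseteq> V" "bij_betw e (Field k) V'" "kl_connected k k V' E"
        using reduction[OF conjunct2[OF GV]] by blast
      interpret D: D1 k V' E e by unfold_locales (use V' in blast)+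
      have "\<forall>c :: 'a set \<Rightarrow> bool. \<exists>H\<subseteq>Field k. |H| =o k \<and> (\<exists>b. \<forall>x\<in>H. \<forall>y\<in>H. x \<noteq> y \<longrightarrow> c {x, y} = b)"
        using wc unfolding weakly_compact_def by (elim conjE)
      hence "\<exists>H\<subseteq>Field k. |H| =o k \<and> (\<exists>b. \<forall>x\<in>H. \<forall>y\<in>H. x \<noteq> y \<longrightarrow> D.col {x, y} = b)"
        by (rule spec)
      then obtain H where H: "H \<subseteq> Field k" "|H| =o k" "\<exists>b. \<forall>x\<in>H. \<forall>y\<in>H. x \<noteq> y \<longrightarrow> D.col {x, y} = b"
        by blast
      then obtain b where b: "\<forall>x\<in>H. \<forall>y\<in>H. x \<noteq> y \<longrightarrow> D.col {x, y} = b" by blast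
      interpret DH: D1H k V' E e H b by unfold_locales (fact H(1), fact H(2), fact b)
      have "has_complete_minor k V' E" by (rule DH.minor)
      thus "has_complete_minor k V E" by (rule hcm_mono[OF V'(1)])
    qed
  next
    assume all: "\<forall>(V :: 'v set) E. graph V E \<and> kl_connected k k V E \<longrightarrow> has_complete_minor k V E"
    show "weakly_compact k"
    proof (rule ccontr)
      assume nwc: "\<not> weakly_compact k"
      have "\<not> (\<forall>c :: 'a set \<Rightarrow> bool. \<exists>H\<subseteq>Field k. |H| =o k \<and> (\<exists>b. \<forall>x\<in>H. \<forall>y\<in>H. x \<noteq> y \<longrightarrow> c {x, y} = b))"
        using nwc CO natk unfolding weakly_compact_def by simp
      then obtain c :: "'a set \<Rightarrow> bool" where c: "\<not> (\<exists>H\<subseteq>Field k. |H| =o k \<and> (\<exists>b. \<forall>x\<in>H. \<forall>y\<in>H. x \<noteq> y \<longrightarrow> c {x, y} = b))"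
        by blast
      have noH: "False" if "H \<subseteq> Field k" "|H| =o k" "\<forall>x\<in>H. \<forall>y\<in>H. x \<noteq> y \<longrightarrow> c {x, y} = b" for H b
      proof -
        have "\<exists>H\<subseteq>Field k. |H| =o k \<and> (\<exists>b. \<forall>x\<in>H. \<forall>y\<in>H. x \<noteq> y \<longrightarrow> c {x, y} = b)"
          using that by blast
        thus False using c by contradiction
      qed
      have "\<exists>(V::'v set) E. graph V E \<and> kl_connected k k V E \<and> \<not> has_complete_minor k V E"
        by (rule nonWC_graph[of c, OF noH assms(2)])
      thus False using all by blast
    qed
  qed
qed


end
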